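(* Let $C$ be an $[n,k]$ code over $\mathbb{F}_q$ with $C^\perp\neq\{\bm 0\}$ and $d^\perp:=d(C^\perp)\ge 3$, and suppose that it is not the case that both $q=2^m$ for some $m\ge 2$ and $d^\perp>4$. If $C$ is monomially equivalent to a dual Hamming code, or if $q=2$, $k=n-1$ and $d^\perp=n$ is odd, then $\gamma(C)=k-d^\perp+3$. Otherwise $\gamma(C)\le k-d^\perp+2$.
   Context: An $[n,k]$ code over $\mathbb{F}_q$ is a $k$-dimensional subspace $C\subseteq\mathbb{F}_q^n$; write $E=\{1,\dots,n\}$. For $\bm{x}\in\mathbb{F}_q^n$, $\mathrm{supp}(\bm{x})=\{i: x_i\neq 0\}$ and the weight is $|\mathrm{supp}(\bm{x})|$; for $B\subseteq\mathbb{F}_q^n$, $\mathrm{Supp}(B)=\bigcup_{\bm{x}\in B}\mathrm{supp}(\bm{x})$. $C^\perp$ is the dual code with respect to the standard inner product and $d(C^\perp)$ is the minimum weight of a nonzero codeword of $C^\perp$. The covering dimension is $\gamma(C)=\infty$ if $\mathrm{Supp}(C)\neq E$, and otherwise $\gamma(C)$ is the least positive integer $r$ such that $C$ has an $r$-dimensional subspace $D$ with $\mathrm{Supp}(D)=E$. A dual Hamming code is an $[(q^k-1)/(q-1),k]$ code over $\mathbb{F}_q$ with a generator matrix whose columns consist of exactly one nonzero vector from each one-dimensional subspace of $\mathbb{F}_q^k$. Two codes are monomially equivalent if one is obtained from the other by permuting coordinates and multiplying coordinates by nonzero scalars. *)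

theory Defs
  imports "HOL-Analysis.Analysis" "HOL-Library.Extended_Nat"
begin

text \<open>Codes of length n = CARD('n) over the finite field 'a; vectors are 'a ^ 'n,
  the coordinate set E is UNIV :: 'n set.\<close>

definition is_code :: "('a::field ^ 'n) set \<Rightarrow> bool" where
  "is_code C \<longleftrightarrow> vec.subspace C"

definition code_dim :: "('a::field ^ 'n) set \<Rightarrow> nat" where
  "code_dim C = vec.dim C"

definition supp :: "'a::zero ^ 'n \<Rightarrow> 'n set" where
  "supp x = {i. x $ i \<noteq> 0}"

definition Supp :: "('a::zero ^ 'n) set \<Rightarrow> 'n set" where
  "Supp B = (\<Union>x\<in>B. supp x)"

definition wt :: "'a::zero ^ 'n::finite \<Rightarrow> nat" where
  "wt x = card (supp x)"

definition dual_code :: "('a::field ^ 'n::finite) set \<Rightarrow> ('a ^ 'n) set" where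
  "dual_code C = {y. \<forall>x\<in>C. (\<Sum>i\<in>UNIV. x $ i * y $ i) = 0}"

definition min_dist :: "('a::field ^ 'n::finite) set \<Rightarrow> nat" where
  "min_dist C = Min {wt x | x. x \<in> C \<and> x \<noteq> 0}"

definition covering_dim :: "('a::field ^ 'n::finite) set \<Rightarrow> enat" where
  "covering_dim C = (if Supp C \<noteq> UNIV then \<infinity>
     else enat (LEAST r. r > 0 \<and> (\<exists>D. vec.subspace D \<and> D \<subseteq> C \<and> vec.dim D = r \<and> Supp D = UNIV)))"

text \<open>Dual Hamming code of dimension k: the row space of a k x n generator matrix G
  (entries G i j, i<k, j in 'n) whose columns are nonzero and contain exactly one nonzero
  vector from each one-dimensional subspace of F_q^k (vectors of F_q^k are functions
  nat => 'a vanishing outside {0..<k}).\<close>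
definition dual_hamming_generator :: "nat \<Rightarrow> (nat \<Rightarrow> 'n::finite \<Rightarrow> 'a::{finite,field}) \<Rightarrow> bool" where
  "dual_hamming_generator k G \<longleftrightarrow>
     CARD('n) = (CARD('a) ^ k - 1) div (CARD('a) - 1) \<and>
     (\<forall>j. \<exists>i<k. G i j \<noteq> 0) \<and>
     (\<forall>v::nat \<Rightarrow> 'a. (\<forall>i\<ge>k. v i = 0) \<and> (\<exists>i. v i \<noteq> 0) \<longrightarrow>
         (\<exists>!j. \<exists>c. \<forall>i<k. G i j = c * v i))"

definition row_space :: "nat \<Rightarrow> (nat \<Rightarrow> 'n::finite \<Rightarrow> 'a::field) \<Rightarrow> ('a ^ 'n) set" where
  "row_space k G = {(\<chi> j. \<Sum>i<k. u i * G i j) | u. True}"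

definition is_dual_hamming :: "nat \<Rightarrow> ('a::{finite,field} ^ 'n::finite) set \<Rightarrow> bool" where
  "is_dual_hamming k H \<longleftrightarrow> (\<exists>G. dual_hamming_generator k G \<and> H = row_space k G)"

definition monomially_equivalent :: "('a::field ^ 'n) set \<Rightarrow> ('a ^ 'n) set \<Rightarrow> bool" where
  "monomially_equivalent C D \<longleftrightarrow>
     (\<exists>\<sigma> c. bij \<sigma> \<and> (\<forall>j. c j \<noteq> 0) \<and> C = (\<lambda>x. \<chi> j. c j * x $ \<sigma> j) ` D)"

end

theory Submission
  imports Defs "HOL-Library.FuncSet"
begin

lemma sep:
  fixes W :: "('a::field ^ 'n::finite) set"
  assumes W: "vec.subspace W" and x: "x \<notin> W"
  shows "\<exists>y. (\<forall>w\<in>W. (\<Sum>i\<in>UNIV. w$i * y$i) = 0) \<and> (\<Sum>i\<in>UNIV. x$i * y$i) \<noteq> 0"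
proof -
  obtain B0 where B0: "B0 \<subseteq> W" "vec.independent B0" "W \<subseteq> vec.span B0"
    by (rule vec.basis_exists)
  have spB0: "vec.span B0 = W" using B0 W vec.span_subspace by blast
  have xs: "x \<notin> vec.span B0" using spB0 x by simp
  have ind1: "vec.independent (insert x B0)" using vec.independent_insertI[OF xs B0(2)] .
  obtain B where B: "insert x B0 \<subseteq> B" "B \<subseteq> UNIV" "vec.independent B" "UNIV \<subseteq> vec.span B"
    by (rule vec.maximal_independent_subset_extend[OF subset_UNIV ind1])
  define f where "f v = vec.representation B v x" for v
  have inB: "v \<in> vec.span B" for v using B(4) by auto
  have flin: "f (\<Sum>i\<in>UNIV. c i *s v i) = (\<Sum>i\<in>UNIV. c i * f (v i))" for c :: "'n \<Rightarrow> 'a" and v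
    unfolding f_def
    by (simp add: vec.representation_sum[OF B(3)] inB vec.representation_scale[OF B(3)])
  define y where "y = (\<chi> i. f (axis i 1))"
  have fv: "f v = (\<Sum>i\<in>UNIV. v$i * y$i)" for v
  proof -
    have "f v = f (\<Sum>i\<in>UNIV. (v$i) *s axis i 1)" by (simp add: basis_expansion)
    also have "\<dots> = (\<Sum>i\<in>UNIV. v$i * f (axis i 1))" by (rule flin)
    finally show ?thesis by (simp add: y_def)
  qed
  have "f w = 0" if "w \<in> W" for w
  proof -
    have "w \<in> vec.span B0" using that spB0 by simp
    then have "f w = vec.representation B0 w x"
      unfolding f_def using vec.representation_extend[OF B(3) _ ] B(1) by auto
    moreover have "vec.representation B0 w x = 0"
    proof (rule ccontr)
      assume "vec.representation B0 w x \<noteq> 0"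
      then have "x \<in> B0" by (rule vec.representation_ne_zero)
      then show False using xs vec.span_base by blast
    qed
    ultimately show ?thesis by simp
  qed
  moreover have "f x = 1" unfolding f_def
    using vec.representation_basis[OF B(3)] B(1) by auto
  ultimately show ?thesis using fv by (intro exI[of _ y]) auto
qed

lemma dual_iff: "y \<in> dual_code C \<longleftrightarrow> (\<forall>x\<in>C. (\<Sum>i\<in>UNIV. x$i * y$i) = 0)"
  by (simp add: dual_code_def)

lemma dual_diff: "y \<in> dual_code C \<Longrightarrow> y' \<in> dual_code C \<Longrightarrow> y - y' \<in> dual_code C"
  by (simp add: dual_code_def algebra_simps sum_subtractf)

lemma dual_scale: "y \<in> dual_code C \<Longrightarrow> c *s y \<in> dual_code C"
  by (simp add: dual_code_def sum_distrib_left[symmetric] mult.left_commute)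

lemma sum_if_K: "(\<Sum>i\<in>(UNIV::'n::finite set). if i \<in> K then f i else 0) = (\<Sum>i\<in>K. f i)"
  using sum.inter_restrict[of "UNIV::'n set" f K] by simp

lemma ext_lemma:
  fixes C :: "('a::field ^ 'n::finite) set"
  assumes C: "vec.subspace C"
    and hyp: "\<forall>y\<in>dual_code C. supp y \<subseteq> K \<longrightarrow> (\<Sum>i\<in>K. y$i * a$i) = 0"
  shows "\<exists>z\<in>C. \<forall>i\<in>K. z$i = a$i"
proof -
  define pr where "pr z = (\<chi> i. if i \<in> K then z$i else 0)" for z :: "'a^'n"
  have prs: "pr z $ i = (if i \<in> K then z$i else 0)" for z i by (simp add: pr_def)
  have W: "vec.subspace (pr ` C)"
    unfolding vec.subspace_def
  proof (intro conjI ballI allI)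
    show "0 \<in> pr ` C" using vec.subspace_0[OF C]
      by (intro image_eqI[of _ _ 0]) (auto simp: vec_eq_iff prs)
  next
    fix x y assume "x \<in> pr ` C" "y \<in> pr ` C"
    then obtain u v where "u \<in> C" "v \<in> C" "x = pr u" "y = pr v" by auto
    then show "x + y \<in> pr ` C" using vec.subspace_add[OF C]
      by (intro image_eqI[of _ _ "u+v"]) (auto simp: vec_eq_iff prs)
  next
    fix c and x assume "x \<in> pr ` C"
    then obtain u where "u \<in> C" "x = pr u" by auto
    then show "c *s x \<in> pr ` C" using vec.subspace_scale[OF C]
      by (intro image_eqI[of _ _ "c *s u"]) (auto simp: vec_eq_iff prs)
  qed
  show ?thesis
  proof (cases "pr a \<in> pr ` C")
    case True
    then obtain z where "z \<in> C" "pr a = pr z" by auto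
    show ?thesis
    proof (intro bexI[of _ z] ballI)
      fix i assume "i \<in> K"
      then show "z$i = a$i" using arg_cong[OF \<open>pr a = pr z\<close>, of "\<lambda>v. v$i"] by (simp add: prs)
    qed fact
  next
    case False
    from sep[OF W False] obtain y where
      y1: "\<forall>w\<in>pr ` C. (\<Sum>i\<in>UNIV. w$i * y$i) = 0" and y2: "(\<Sum>i\<in>UNIV. pr a $i * y$i) \<noteq> 0"
      by blast
    have "pr y \<in> dual_code C"
    proof -
      have "(\<Sum>i\<in>UNIV. x$i * pr y $i) = 0" if "x \<in> C" for x
      proof -
        have "(\<Sum>i\<in>UNIV. x$i * pr y $i) = (\<Sum>i\<in>UNIV. pr x $ i * y$i)"
          by (rule sum.cong) (auto simp: prs)
        then show ?thesis using y1 that by auto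
      qed
      then show ?thesis by (simp add: dual_iff)
    qed
    moreover have "supp (pr y) \<subseteq> K" by (auto simp: supp_def prs)
    ultimately have "(\<Sum>i\<in>K. pr y $ i * a$i) = 0" using hyp by blast
    moreover have "(\<Sum>i\<in>UNIV. pr a $i * y$i) = (\<Sum>i\<in>K. pr y $ i * a$i)"
    proof -
      have "(\<Sum>i\<in>UNIV. pr a $i * y$i) = (\<Sum>i\<in>UNIV. if i \<in> K then pr y $ i * a$i else 0)"
        by (rule sum.cong) (auto simp: prs)
      then show ?thesis by (simp only: sum_if_K)
    qed
    ultimately have False using y2 by argo
    then show ?thesis ..
  qed
qed

lemma wt_le_card: "supp (y::'a::zero^'n::finite) \<subseteq> K \<Longrightarrow> wt y \<le> card K"
  unfolding wt_def by (rule card_mono) auto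

lemma wt_le_n: "wt (y::'a::zero^'n::finite) \<le> CARD('n)"
  using wt_le_card[of y UNIV] by simp

lemma supp_eq_zero: "supp y = {} \<longleftrightarrow> y = 0"
  by (auto simp: supp_def vec_eq_iff)

lemma md_le:
  fixes y :: "'a::field^'n::finite"
  assumes "y \<in> D" "y \<noteq> 0" shows "min_dist D \<le> wt y"
proof -
  have "finite {wt x | x. x \<in> D \<and> x \<noteq> 0}"
    by (rule finite_subset[of _ "{..CARD('n)}"]) (auto simp: wt_le_n)
  then show ?thesis unfolding min_dist_def using assms by (intro Min_le) auto
qed

lemma md_attained:
  fixes D :: "('a::field^'n::finite) set"
  assumes "\<exists>y\<in>D. y \<noteq> 0" shows "\<exists>y\<in>D. y \<noteq> 0 \<and> wt y = min_dist D"
proof -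
  have "finite {wt x | x. x \<in> D \<and> x \<noteq> 0}"
    by (rule finite_subset[of _ "{..CARD('n)}"]) (auto simp: wt_le_n)
  moreover have "{wt x | x. x \<in> D \<and> x \<noteq> 0} \<noteq> {}" using assms by auto
  ultimately have "min_dist D \<in> {wt x | x. x \<in> D \<and> x \<noteq> 0}"
    unfolding min_dist_def by (rule Min_in)
  then show ?thesis by auto
qed

lemma small_dual_zero:
  fixes C :: "('a::field^'n::finite) set"
  assumes "y \<in> dual_code C" "supp y \<subseteq> K" "card K < min_dist (dual_code C)"
  shows "y = 0"
proof (rule ccontr)
  assume "y \<noteq> 0"
  then have "min_dist (dual_code C) \<le> wt y" using md_le assms(1) by blast
  moreover have "wt y \<le> card K" using wt_le_card assms(2) by blast
  ultimately show False using assms(3) by simp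
qed

lemma surj_lemma:
  fixes C :: "('a::field^'n::finite) set"
  assumes C: "vec.subspace C" and K: "card K < min_dist (dual_code C)"
  shows "\<exists>z\<in>C. \<forall>i\<in>K. z$i = a$i"
proof (rule ext_lemma[OF C], intro ballI impI)
  fix y assume "y \<in> dual_code C" "supp y \<subseteq> K"
  then have "y = 0" using small_dual_zero K by blast
  then show "(\<Sum>i\<in>K. y$i * a$i) = 0" by simp
qed

lemma Supp_full:
  fixes C :: "('a::field^'n::finite) set"
  assumes C: "vec.subspace C" and d: "2 \<le> min_dist (dual_code C)"
  shows "Supp C = UNIV"
proof -
  have "j \<in> Supp C" for j
  proof -
    obtain z where "z \<in> C" "\<forall>i\<in>{j}. z$i = (1::'a^'n)$i"
      using surj_lemma[OF C, of "{j}" 1] d by auto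
    then show ?thesis unfolding Supp_def supp_def by (intro UN_I[of z]) auto
  qed
  then show ?thesis by auto
qed

lemma dim_pos_if_Supp:
  fixes D :: "('a::field^'n::finite) set"
  assumes "Supp D = UNIV" shows "vec.dim D > 0"
proof -
  obtain j :: 'n where True by simp
  then obtain z where "z \<in> D" "z$j \<noteq> 0" using assms by (auto simp: Supp_def supp_def)
  then have "z \<noteq> 0" by auto
  then have "\<not> D \<subseteq> {0}" using \<open>z \<in> D\<close> by auto
  then show ?thesis using vec.dim_eq_0 by (metis gr0I)
qed

lemma cov_le:
  fixes C D :: "('a::field^'n::finite) set"
  assumes "Supp C = UNIV" "vec.subspace D" "D \<subseteq> C" "Supp D = UNIV"
  shows "covering_dim C \<le> enat (vec.dim D)"
proof -
  have "(LEAST r. r > 0 \<and> (\<exists>D. vec.subspace D \<and> D \<subseteq> C \<and> vec.dim D = r \<and> Supp D = UNIV)) \<le> vec.dim D"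
    using assms dim_pos_if_Supp[OF assms(4)] by (intro Least_le) blast
  then show ?thesis using assms(1) by (simp add: covering_dim_def)
qed

lemma dim_lt_if_notin:
  fixes C D :: "('a::field^'n::finite) set"
  assumes "vec.subspace D" "D \<subseteq> C" "x \<in> C" "x \<notin> D"
  shows "vec.dim D < vec.dim C"
proof -
  have "x \<notin> vec.span D" using assms(1,4) by (simp add: vec.span_eq_iff[THEN iffD2])
  then have "vec.dim (insert x D) = vec.dim D + 1" by (simp add: vec.dim_insert)
  moreover have "vec.dim (insert x D) \<le> vec.dim C" using assms by (intro vec.dim_subset) auto
  ultimately show ?thesis by simp
qed

lemma ham_functional:
  fixes C :: "('a::{finite,field}^'n::finite) set"
  assumes "is_dual_hamming k' H" "monomially_equivalent C H"
    and nz: "\<exists>x\<in>C. (\<Sum>i\<in>UNIV. x$i * y$i) \<noteq> 0"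
  shows "\<exists>j e. \<forall>z\<in>C. (\<Sum>i\<in>UNIV. z$i * y$i) = e * z$j"
proof -
  obtain G where gen: "dual_hamming_generator k' G" and H: "H = row_space k' G"
    using assms(1) by (auto simp: is_dual_hamming_def)
  obtain \<sigma> cc where sg: "bij \<sigma>" and cc: "\<forall>j. cc j \<noteq> 0"
    and CH: "C = (\<lambda>x. \<chi> j. cc j * x $ \<sigma> j) ` H"
    using assms(2) by (auto simp: monomially_equivalent_def)
  define M where "M u = (\<chi> j. cc j * (\<Sum>i<k'. u i * G i (\<sigma> j)))" for u :: "nat \<Rightarrow> 'a"
  have Mu: "(\<lambda>x. \<chi> j. cc j * x $ \<sigma> j) (\<chi> j. \<Sum>i<k'. u i * G i j) = M u" for u
    by (simp add: M_def)
  have Cdesc: "z \<in> C \<longleftrightarrow> (\<exists>u. z = M u)" for z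
  proof
    assume "z \<in> C" then show "\<exists>u. z = M u" unfolding CH H row_space_def using Mu by auto
  next
    assume "\<exists>u. z = M u"
    then obtain u where "z = M u" by blast
    then show "z \<in> C" unfolding CH H row_space_def using Mu[of u, symmetric] by blast
  qed
  define v where "v i = (if i < k' then \<Sum>j\<in>UNIV. y$j * cc j * G i (\<sigma> j) else 0)" for i
  have key: "(\<Sum>j\<in>UNIV. M u $ j * y$j) = (\<Sum>i<k'. u i * v i)" for u
  proof -
    have "(\<Sum>j\<in>UNIV. M u $ j * y$j) = (\<Sum>j\<in>UNIV. \<Sum>i<k'. u i * (y$j * cc j * G i (\<sigma> j)))"
      unfolding M_def by (simp add: sum_distrib_left sum_distrib_right mult_ac)
    also have "\<dots> = (\<Sum>i<k'. \<Sum>j\<in>UNIV. u i * (y$j * cc j * G i (\<sigma> j)))"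
      by (rule sum.swap)
    also have "\<dots> = (\<Sum>i<k'. u i * v i)"
      by (simp add: v_def sum_distrib_left)
    finally show ?thesis .
  qed
  obtain x0 where "x0 \<in> C" "(\<Sum>j\<in>UNIV. x0 $ j * y$j) \<noteq> 0" using nz by blast
  moreover obtain u0 where "x0 = M u0" using Cdesc[of x0] \<open>x0 \<in> C\<close> by blast
  ultimately have "(\<Sum>j\<in>UNIV. M u0 $ j * y$j) \<noteq> 0" by simp
  then have "(\<Sum>i<k'. u0 i * v i) \<noteq> 0" using key by simp
  then obtain i0 where "v i0 \<noteq> 0" by (metis (no_types, lifting) mult_zero_right sum.neutral)
  moreover have "\<forall>i\<ge>k'. v i = 0" by (simp add: v_def)
  ultimately obtain j0 c where jc: "\<forall>i<k'. G i j0 = c * v i"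
    using gen unfolding dual_hamming_generator_def by blast
  obtain i1 where "i1 < k'" "G i1 j0 \<noteq> 0" using gen unfolding dual_hamming_generator_def by blast
  then have c0: "c \<noteq> 0" using jc by auto
  obtain j where j: "\<sigma> j = j0" using sg by (metis bij_pointE)
  show ?thesis
  proof (intro exI[of _ j] exI[of _ "inverse (cc j * c)"] ballI)
    fix z assume "z \<in> C"
    then obtain u where z: "z = M u" using Cdesc by blast
    have "z $ j = cc j * (\<Sum>i<k'. u i * (c * v i))" using jc j by (simp add: z M_def)
    also have "\<dots> = cc j * c * (\<Sum>i<k'. u i * v i)"
      by (simp add: sum_distrib_left mult_ac)
    finally have "z $ j = cc j * c * (\<Sum>j\<in>UNIV. z $ j * y$j)" using key z by simp
    then show "(\<Sum>i\<in>UNIV. z$i * y$i) = inverse (cc j * c) * z$j"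
      using cc c0 by (simp add: field_simps)
  qed
qed

lemma sum_two:
  fixes z :: "'a::comm_ring_1^'n::finite"
  assumes "j1 \<noteq> j2"
  shows "(\<Sum>i\<in>UNIV. z$i * (if i = j1 \<or> i = j2 then 1 else 0)) = z$j1 + z$j2"
proof -
  have "(\<Sum>i\<in>UNIV. z$i * (if i = j1 \<or> i = j2 then 1 else 0)) = (\<Sum>i\<in>UNIV. if i \<in> {j1,j2} then z$i else 0)"
    by (rule sum.cong) auto
  also have "\<dots> = z$j1 + z$j2" using assms by (simp only: sum_if_K) simp
  finally show ?thesis .
qed

lemma two_distinct:
  assumes "2 \<le> CARD('n::finite)" obtains j1 j2 :: "'n::finite" where "j1 \<noteq> j2"
proof -
  obtain S :: "'n set" where "card S = 2" using assms by (meson ex_card)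
  then show ?thesis using that by (auto simp: card_2_iff)
qed

lemma covering_exact:
  fixes C :: "('a::field^'n::finite) set"
  assumes "Supp C = UNIV" "vec.subspace D0" "D0 \<subseteq> C" "Supp D0 = UNIV"
    and low: "\<And>D. vec.subspace D \<Longrightarrow> D \<subseteq> C \<Longrightarrow> Supp D = UNIV \<Longrightarrow> vec.dim D0 \<le> vec.dim D"
  shows "covering_dim C = enat (vec.dim D0)"
proof -
  have "(LEAST r. r > 0 \<and> (\<exists>D. vec.subspace D \<and> D \<subseteq> C \<and> vec.dim D = r \<and> Supp D = UNIV)) = vec.dim D0"
  proof (rule Least_equality)
    show "vec.dim D0 > 0 \<and> (\<exists>D. vec.subspace D \<and> D \<subseteq> C \<and> vec.dim D = vec.dim D0 \<and> Supp D = UNIV)"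
      using assms dim_pos_if_Supp[OF assms(4)] by blast
  next
    fix r assume "r > 0 \<and> (\<exists>D. vec.subspace D \<and> D \<subseteq> C \<and> vec.dim D = r \<and> Supp D = UNIV)"
    then show "vec.dim D0 \<le> r" using low by blast
  qed
  then show ?thesis using assms(1) by (simp add: covering_dim_def)
qed

lemma part_ham:
  fixes C :: "('a::{finite,field}^'n::finite) set"
  assumes C: "vec.subspace C" and dne: "dual_code C \<noteq> {0}"
    and d3: "3 \<le> min_dist (dual_code C)"
    and hm: "is_dual_hamming k' H" "monomially_equivalent C H"
  shows "min_dist (dual_code C) = 3 \<and> covering_dim C = enat (vec.dim C)"
proof
  have dual0: "0 \<in> dual_code C" by (simp add: dual_code_def)
  then obtain y0 where "y0 \<in> dual_code C" "y0 \<noteq> 0" "wt y0 = min_dist (dual_code C)"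
    using md_attained dne by blast
  then have "3 \<le> CARD('n)" using d3 wt_le_n[of y0] by simp
  then have "2 \<le> CARD('n)" by simp
  then obtain j1 j2 :: 'n where j12: "j1 \<noteq> j2" by (rule two_distinct)
  have SC: "Supp C = UNIV" using Supp_full[OF C] d3 by simp
  show "min_dist (dual_code C) = 3"
  proof -
    have "card {j1,j2} < min_dist (dual_code C)" using d3 j12 by simp
    then obtain z where z: "z \<in> C" "\<forall>i\<in>{j1,j2}. z$i = (axis j1 1 :: 'a^'n)$i"
      using surj_lemma[OF C] by blast
    then have "z$j1 = 1" "z$j2 = 0" using j12 by (auto simp: axis_def)
    define yv :: "'a^'n" where "yv = (\<chi> i. if i = j1 \<or> i = j2 then 1 else 0)"
    have dyv: "(\<Sum>i\<in>UNIV. x$i * yv$i) = x$j1 + x$j2" for x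
      unfolding yv_def using sum_two[OF j12] by simp
    have "\<exists>x\<in>C. (\<Sum>i\<in>UNIV. x$i * yv$i) \<noteq> 0"
      using z \<open>z$j1 = 1\<close> \<open>z$j2 = 0\<close> dyv by (intro bexI[of _ z]) auto
    from ham_functional[OF hm this] obtain j3 e where
      je: "\<forall>z\<in>C. (\<Sum>i\<in>UNIV. z$i * yv$i) = e * z$j3" by blast
    define w where "w = yv - e *s axis j3 1"
    have "w \<in> dual_code C"
    proof -
      have "(\<Sum>i\<in>UNIV. x$i * w$i) = 0" if "x \<in> C" for x
      proof -
        have "(\<Sum>i\<in>UNIV. x$i * w$i) = (\<Sum>i\<in>UNIV. x$i * yv$i) - (\<Sum>i\<in>UNIV. x$i * (e *s axis j3 1)$i)"
          by (simp add: w_def algebra_simps sum_subtractf)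
        also have "(\<Sum>i\<in>UNIV. x$i * (e *s axis j3 1)$i) = (\<Sum>i\<in>UNIV. if i = j3 then x$i * e else 0)"
          by (rule sum.cong) (auto simp: axis_def)
        also have "\<dots> = e * x$j3" by (simp add: mult.commute)
        finally show ?thesis using je that by simp
      qed
      then show ?thesis by (simp add: dual_iff)
    qed
    moreover have "w \<noteq> 0"
    proof (cases "j3 = j1")
      case True
      then have "w$j2 = 1" using j12 by (simp add: w_def yv_def axis_def)
      then show ?thesis by auto
    next
      case False
      then have "w$j1 = 1" by (simp add: w_def yv_def axis_def)
      then show ?thesis by auto
    qed
    moreover have "supp w \<subseteq> {j1,j2,j3}" by (auto simp: supp_def w_def yv_def axis_def)
    then have "wt w \<le> card {j1,j2,j3}" by (rule wt_le_card)
    moreover have "card {j1,j2,j3} \<le> 3" by (simp add: card_insert_if)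
    ultimately have "min_dist (dual_code C) \<le> 3" using md_le by (metis le_trans)
    then show ?thesis using d3 by simp
  qed
  show "covering_dim C = enat (vec.dim C)"
  proof (rule covering_exact[OF SC C order_refl SC])
    fix D assume D: "vec.subspace D" "D \<subseteq> C" "Supp D = UNIV"
    have "D = C"
    proof (rule ccontr)
      assume "D \<noteq> C"
      then obtain x where x: "x \<in> C" "x \<notin> D" using D by blast
      from sep[OF D(1) x(2)] obtain y where
        y1: "\<forall>w\<in>D. (\<Sum>i\<in>UNIV. w$i * y$i) = 0" and y2: "(\<Sum>i\<in>UNIV. x$i * y$i) \<noteq> 0" by blast
      from ham_functional[OF hm] x y2 obtain j e where
        je: "\<forall>z\<in>C. (\<Sum>i\<in>UNIV. z$i * y$i) = e * z$j" by blast
      have "e \<noteq> 0" using je x y2 by auto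
      have "z$j = 0" if "z \<in> D" for z
      proof -
        have "e * z$j = 0" using je y1 D(2) that by (metis subsetD)
        then show ?thesis using \<open>e \<noteq> 0\<close> by simp
      qed
      then have "j \<notin> Supp D" by (auto simp: Supp_def supp_def)
      then show False using D(3) by simp
    qed
    then show "vec.dim C \<le> vec.dim D" by simp
  qed
qed

lemma bin_nz:
  assumes "CARD('a::{finite,field}) = 2" "(x::'a) \<noteq> 0" shows "x = 1"
proof -
  have "{0,1::'a} = UNIV" using assms(1) by (intro card_subset_eq) auto
  then show ?thesis using assms(2) by (metis UNIV_I insertE singletonD)
qed

lemma bin_two: assumes "CARD('a::{finite,field}) = 2" shows "(2::'a) = 0"
proof (rule ccontr)
  assume "(2::'a) \<noteq> 0"
  then have "(2::'a) = 1" using bin_nz[OF assms] by blast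
  then have "(1::'a) + 1 = 1 + 0" by (simp add: one_add_one)
  then have "(1::'a) = 0" by (simp only: add_left_cancel)
  then show False by simp
qed

lemma bin_odd: assumes "CARD('a::{finite,field}) = 2" "odd n" shows "(of_nat n::'a) = 1"
proof -
  obtain m where "n = Suc (2*m)" using assms(2) by (metis oddE Suc_eq_plus1 add.commute)
  then show ?thesis using bin_two[OF assms(1)] by simp
qed

lemma full_wt_supp:
  fixes y :: "'a::zero^'n::finite"
  assumes "wt y = CARD('n)" shows "y$i \<noteq> 0"
proof -
  have "supp y = UNIV" using assms unfolding wt_def by (intro card_subset_eq) auto
  then show ?thesis by (auto simp: supp_def)
qed

lemma sum_remove_one:
  fixes u :: "'a::comm_monoid_add^'n::finite"
  shows "(\<Sum>i\<in>UNIV. u$i) = u$j + (\<Sum>i\<in>UNIV-{j}. u$i)"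
  by (simp add: sum.remove)

lemma part_even:
  fixes C :: "('a::{finite,field}^'n::finite) set"
  assumes C: "vec.subspace C" and dne: "dual_code C \<noteq> {0}"
    and q2: "CARD('a) = 2" and dn: "min_dist (dual_code C) = CARD('n)" and od: "odd (CARD('n))"
    and d3: "3 \<le> min_dist (dual_code C)"
  shows "covering_dim C = enat 2"
proof -
  let ?n = "CARD('n)"
  have dual0: "0 \<in> dual_code C" by (simp add: dual_code_def)
  then obtain y0 where y0: "y0 \<in> dual_code C" "y0 \<noteq> 0" "wt y0 = min_dist (dual_code C)"
    using md_attained dne by blast
  have y01: "y0$i = 1" for i using full_wt_supp[of y0 i] y0(3) dn bin_nz[OF q2] by simp
  have sum0: "(\<Sum>i\<in>UNIV. x$i) = 0" if "x \<in> C" for x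
    using y0(1) that y01 by (simp add: dual_iff)
  have SC: "Supp C = UNIV" using Supp_full[OF C] d3 by simp
  have "2 \<le> ?n" using d3 dn by simp
  then obtain j1 j2 :: 'n where j12: "j1 \<noteq> j2" by (rule two_distinct)
  have cK: "card (UNIV - {j2}) < min_dist (dual_code C)" using dn d3 by (simp add: card_Diff_subset)
  obtain u where u: "u \<in> C" "\<forall>i\<in>UNIV-{j2}. u$i = (axis j1 1::'a^'n)$i"
    using surj_lemma[OF C cK] by blast
  obtain v where v: "v \<in> C" "\<forall>i\<in>UNIV-{j2}. v$i = (1 - axis j1 1::'a^'n)$i"
    using surj_lemma[OF C cK] by blast
  have "(\<Sum>i\<in>UNIV-{j2}. u$i) = (\<Sum>i\<in>UNIV-{j2}. (axis j1 1::'a^'n)$i)"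
    using u(2) by (intro sum.cong) auto
  also have "\<dots> = (\<Sum>i\<in>UNIV-{j2}. if i = j1 then 1 else 0)"
    by (intro sum.cong) (auto simp: axis_def)
  also have "\<dots> = 1" using j12 by simp
  finally have "u$j2 + 1 = 0" using sum0[OF u(1)] sum_remove_one[of u j2] by simp
  then have uj2: "u$j2 \<noteq> 0" by (metis add_0 one_neq_zero)
  have uj1: "u$j1 \<noteq> 0" using u(2) j12 by (auto simp: axis_def)
  have vi: "v$i \<noteq> 0" if "i \<noteq> j1" "i \<noteq> j2" for i using v(2) that by (auto simp: axis_def)
  define D0 where "D0 = vec.span {u, v}"
  have D0s: "vec.subspace D0" by (simp add: D0_def)
  have D0C: "D0 \<subseteq> C" unfolding D0_def using u(1) v(1) C by (intro vec.span_minimal) auto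
  have D0S: "Supp D0 = UNIV"
  proof -
    have "j \<in> Supp D0" for j
    proof -
      have "u \<in> D0" "v \<in> D0" unfolding D0_def by (auto intro: vec.span_base)
      then show ?thesis using uj1 uj2 vi[of j] unfolding Supp_def supp_def by (cases "j = j1 \<or> j = j2") auto
    qed
    then show ?thesis by auto
  qed
  have low: "2 \<le> vec.dim D" if D: "vec.subspace D" "D \<subseteq> C" "Supp D = UNIV" for D
  proof (rule ccontr)
    assume "\<not> 2 \<le> vec.dim D"
    moreover have "vec.dim D > 0" using dim_pos_if_Supp[OF D(3)] .
    ultimately have d1: "vec.dim D = 1" by simp
    obtain B where B: "B \<subseteq> D" "vec.independent B" "D \<subseteq> vec.span B" "card B = vec.dim D"
      by (rule vec.basis_exists)
    then obtain b where b: "B = {b}" using d1 by (auto simp: card_1_singleton_iff)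
    have "b$j = 1" for j
    proof -
      obtain z where "z \<in> D" "z$j \<noteq> 0" using D(3) by (auto simp: Supp_def supp_def)
      then obtain c where "z = c *s b" using B(3) b by (auto simp: vec.span_singleton)
      then have "b$j \<noteq> 0" using \<open>z$j \<noteq> 0\<close> by auto
      then show ?thesis using bin_nz[OF q2] by blast
    qed
    moreover have "b \<in> C" using B(1) b D(2) by auto
    ultimately have "(\<Sum>i\<in>UNIV. b$i) = 0" using sum0 by blast
    then have "(\<Sum>i\<in>(UNIV::'n set). (1::'a)) = 0" using \<open>\<And>j. b$j = 1\<close> by simp
    then have "(of_nat ?n :: 'a) = 0" by simp
    then show False using bin_odd[OF q2 od] by simp
  qed
  have D02: "vec.dim D0 \<le> 2"
  proof -
    have "vec.dim D0 = vec.dim {u,v}" by (simp add: D0_def)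
    also have "\<dots> \<le> card {u,v}" by (rule vec.dim_le_card) (auto intro: vec.span_base)
    also have "\<dots> \<le> 2" by (simp add: card_insert_if)
    finally show ?thesis .
  qed
  have "covering_dim C = enat (vec.dim D0)"
    by (rule covering_exact[OF SC D0s D0C D0S]) (use low D02 in \<open>force\<close>)
  moreover note D02
  moreover have "2 \<le> vec.dim D0" using low[OF D0s D0C D0S] .
  ultimately show ?thesis by simp
qed

lemma card_fun_k: "card {v::nat \<Rightarrow> 'a::{finite,zero}. \<forall>i\<ge>k. v i = 0} = CARD('a)^k"
proof -
  let ?V = "{v::nat \<Rightarrow> 'a. \<forall>i\<ge>k. v i = 0}"
  have "bij_betw (\<lambda>v. restrict v {0..<k}) ?V (PiE {0..<k} (\<lambda>_. UNIV))"
  proof (rule bij_betw_imageI)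
    show "inj_on (\<lambda>v. restrict v {0..<k}) ?V"
    proof (rule inj_onI)
      fix v w assume "v \<in> ?V" "w \<in> ?V" "restrict v {0..<k} = restrict w {0..<k}"
      show "v = w"
      proof
        fix i show "v i = w i"
        proof (cases "i < k")
          case True
          then show ?thesis using fun_cong[OF \<open>restrict v {0..<k} = restrict w {0..<k}\<close>, of i] by simp
        next
          case False
          then show ?thesis using \<open>v \<in> ?V\<close> \<open>w \<in> ?V\<close> by simp
        qed
      qed
    qed
  next
    show "(\<lambda>v. restrict v {0..<k}) ` ?V = PiE {0..<k} (\<lambda>_. UNIV)"
    proof
      show "(\<lambda>v. restrict v {0..<k}) ` ?V \<subseteq> PiE {0..<k} (\<lambda>_. UNIV)" by auto
    next
      show "PiE {0..<k} (\<lambda>_. UNIV) \<subseteq> (\<lambda>v. restrict v {0..<k}) ` ?V"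
      proof
        fix f assume f: "f \<in> PiE {0..<k} (\<lambda>_. (UNIV::'a set))"
        define v where "v i = (if i < k then f i else 0)" for i
        have "restrict v {0..<k} = f" using f by (auto simp: v_def restrict_def PiE_def extensional_def)
        moreover have "v \<in> ?V" by (simp add: v_def)
        ultimately show "f \<in> (\<lambda>v. restrict v {0..<k}) ` ?V" by blast
      qed
    qed
  qed
  then have "card ?V = card (PiE {0..<k} (\<lambda>_. (UNIV::'a set)))" by (rule bij_betw_same_card)
  also have "\<dots> = CARD('a)^k" by (simp add: card_PiE)
  finally show ?thesis .
qed

lemma ham_card:
  fixes G :: "nat \<Rightarrow> 'n::finite \<Rightarrow> 'a::{finite,field}"
  assumes col: "\<forall>j. \<exists>i<k. G i j \<noteq> 0"
    and ex1: "\<forall>v::nat \<Rightarrow> 'a. (\<forall>i\<ge>k. v i = 0) \<and> (\<exists>i. v i \<noteq> 0) \<longrightarrow> (\<exists>!j. \<exists>c. \<forall>i<k. G i j = c * v i)"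
  shows "CARD('n) = (CARD('a)^k - 1) div (CARD('a) - 1)"
proof -
  let ?V = "{v::nat \<Rightarrow> 'a. \<forall>i\<ge>k. v i = 0}"
  let ?Vnz = "?V - {\<lambda>_. 0}"
  define F where "F p = (\<lambda>i. if i < k then snd p * G i (fst p) else 0)" for p :: "'n \<times> 'a"
  have bij: "bij_betw F (UNIV \<times> (UNIV - {0})) ?Vnz"
  proof (rule bij_betw_imageI)
    show "inj_on F (UNIV \<times> (UNIV - {0}))"
    proof (rule inj_onI)
      fix p p' assume p: "p \<in> UNIV \<times> (UNIV - {0::'a})" and p': "p' \<in> UNIV \<times> (UNIV - {0::'a})"
        and eq: "F p = F p'"
      obtain j c where pj: "p = (j, c)" by (cases p)
      obtain j' c' where pj': "p' = (j', c')" by (cases p')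
      have c: "c \<noteq> 0" "c' \<noteq> 0" using p p' pj pj' by auto
      let ?v = "F p"
      have vV: "\<forall>i\<ge>k. ?v i = 0" by (simp add: F_def)
      obtain i1 where i1: "i1 < k" "G i1 j \<noteq> 0" using col by blast
      have "?v i1 \<noteq> 0" using i1 c by (simp add: F_def pj)
      then have "\<exists>!j. \<exists>c. \<forall>i<k. G i j = c * ?v i" using ex1 vV by blast
      moreover have "\<forall>i<k. G i j = inverse c * ?v i" using c by (simp add: F_def pj)
      moreover have "\<forall>i<k. G i j' = inverse c' * ?v i" using c eq by (simp add: F_def pj')
      ultimately have jj: "j = j'" by blast
      have "c * G i1 j = c' * G i1 j" using fun_cong[OF eq, of i1] i1 by (simp add: F_def pj pj' jj)
      then have "c = c'" using i1 by simp
      then show "p = p'" using pj pj' jj by simp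
    qed
  next
    show "F ` (UNIV \<times> (UNIV - {0})) = ?Vnz"
    proof
      show "F ` (UNIV \<times> (UNIV - {0})) \<subseteq> ?Vnz"
      proof
        fix x assume "x \<in> F ` (UNIV \<times> (UNIV - {0}))"
        then obtain j c where c: "c \<noteq> 0" and x: "x = F (j,c)" by auto
        obtain i1 where i1: "i1 < k" "G i1 j \<noteq> 0" using col by blast
        have "\<forall>i\<ge>k. x i = 0" by (simp add: F_def x)
        moreover have "x i1 \<noteq> 0" using i1 c by (simp add: F_def x)
        ultimately show "x \<in> ?Vnz" by auto
      qed
    next
      show "?Vnz \<subseteq> F ` (UNIV \<times> (UNIV - {0}))"
      proof
        fix v assume v: "v \<in> ?Vnz"
        then have "\<exists>i. v i \<noteq> 0" by auto
        then obtain j c where jc: "\<forall>i<k. G i j = c * v i" using ex1 v by blast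
        obtain i1 where i1: "i1 < k" "G i1 j \<noteq> 0" using col by blast
        then have c: "c \<noteq> 0" using jc by auto
        have "F (j, inverse c) = v"
        proof
          fix i show "F (j, inverse c) i = v i" using v jc c by (auto simp: F_def)
        qed
        then show "v \<in> F ` (UNIV \<times> (UNIV - {0}))" using c by force
      qed
    qed
  qed
  have "card ?Vnz = CARD('n) * (CARD('a) - 1)"
    using bij_betw_same_card[OF bij] by (simp add: card_cartesian_product card_Diff_subset)
  moreover have "card ?Vnz = CARD('a)^k - 1"
    using card_fun_k[of k, where 'a='a] by (simp add: card_Diff_subset)
  moreover have "CARD('a) - 1 > 0"
  proof -
    have "{0,1::'a} \<subseteq> UNIV" by simp
    then have "card {0,1::'a} \<le> CARD('a)" by (intro card_mono) auto
    then show ?thesis by simp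
  qed
  ultimately show ?thesis by (metis nonzero_mult_div_cancel_right less_not_refl2)
qed

lemma sum_2pt:
  fixes f :: "nat \<Rightarrow> 'a::comm_ring_1"
  assumes "i < k" "i0 < k" "i \<noteq> i0"
  shows "(\<Sum>l<k. (if l = i then A else if l = i0 then B else 0) * f l) = A * f i + B * f i0"
proof -
  have "(\<Sum>l<k. (if l = i then A else if l = i0 then B else 0) * f l)
      = (\<Sum>l<k. (if l = i then A * f l else 0) + (if l = i0 then B * f l else 0))"
    using assms(3) by (intro sum.cong) auto
  also have "\<dots> = A * f i + B * f i0" using assms by (simp add: sum.distrib)
  finally show ?thesis .
qed

lemma sum_2vec:
  fixes z :: "'a::comm_ring_1^'n::finite"
  assumes "j \<noteq> j'"
  shows "(\<Sum>l\<in>UNIV. z$l * (c' *s axis j 1 - c *s axis j' 1)$l) = c' * z$j - c * z$j'"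
proof -
  have "(\<Sum>l\<in>UNIV. z$l * (c' *s axis j 1 - c *s axis j' 1)$l)
     = (\<Sum>l\<in>UNIV. (if l = j then c' * z$l else 0) - (if l = j' then c * z$l else 0))"
    by (intro sum.cong) (auto simp: axis_def algebra_simps)
  also have "\<dots> = c' * z$j - c * z$j'" by (simp add: sum_subtractf)
  finally show ?thesis .
qed

lemma hamming_construct:
  fixes C :: "('a::{finite,field}^'n::finite) set"
  assumes C: "vec.subspace C" and d3: "3 \<le> min_dist (dual_code C)"
    and noD: "\<forall>D. vec.subspace D \<and> D \<subseteq> C \<and> Supp D = UNIV \<longrightarrow> D = C"
  shows "is_dual_hamming (vec.dim C) C"
proof -
  define k where "k = vec.dim C"
  have SC: "Supp C = UNIV" using Supp_full[OF C] d3 by simp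
  obtain B where B: "B \<subseteq> C" "vec.independent B" "C \<subseteq> vec.span B" "card B = vec.dim C"
    by (rule vec.basis_exists)
  have fB: "finite B" using B(2) vec.finiteI_independent by auto
  obtain b where b: "bij_betw b {0..<k} B" using ex_bij_betw_nat_finite[OF fB] B(4) k_def by auto
  have spB: "vec.span B = C" using vec.span_subspace[OF B(1) B(3) C] .
  define G where "G i j = b i $ j" for i j
  have binB: "b i \<in> B" if "i < k" for i using b that bij_betw_apply by fastforce
  have comp: "(\<Sum>i<k. u i *s b i) $ j = (\<Sum>i<k. u i * G i j)" for u j
    by (simp add: G_def sum_component)
  have inC: "(\<Sum>i<k. u i *s b i) \<in> C" for u
    using binB B(1) C by (intro vec.subspace_sum[OF C]) (auto intro: vec.subspace_scale)
  have repr: "\<exists>u. z = (\<Sum>i<k. u i *s b i)" if "z \<in> C" for z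
  proof -
    have "z \<in> vec.span B" using that spB by simp
    then obtain c where "z = (\<Sum>v\<in>B. c v *s v)" using vec.span_finite[OF fB] by auto
    also have "\<dots> = (\<Sum>i\<in>{0..<k}. c (b i) *s b i)"
      by (rule sum.reindex_bij_betw[OF b, symmetric])
    finally show ?thesis by (auto simp: lessThan_atLeast0)
  qed
  have uniq: "u i = 0" if "(\<Sum>i<k. u i *s b i) = 0" "i < k" for u i
  proof -
    define c where "c v = u (the_inv_into {0..<k} b v)" for v
    have inj: "inj_on b {0..<k}" using b by (simp add: bij_betw_def)
    have cb: "c (b l) = u l" if "l < k" for l using that the_inv_into_f_f[OF inj] by (simp add: c_def)
    have "(\<Sum>v\<in>B. c v *s v) = (\<Sum>l\<in>{0..<k}. c (b l) *s b l)"
      by (rule sum.reindex_bij_betw[OF b, symmetric])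
    also have "\<dots> = (\<Sum>l<k. u l *s b l)" using cb by (simp add: lessThan_atLeast0)
    finally have "(\<Sum>v\<in>B. c v *s v) = 0" using that(1) by simp
    then have "\<forall>v\<in>B. c v = 0" using B(2) vec.independent_explicit by blast
    then show ?thesis using cb binB that(2) by metis
  qed
  have col: "\<forall>j. \<exists>i<k. G i j \<noteq> 0"
  proof
    fix j
    obtain z where z: "z \<in> C" "z$j \<noteq> 0" using SC by (auto simp: Supp_def supp_def)
    then obtain u where "z = (\<Sum>i<k. u i *s b i)" using repr by blast
    then have "(\<Sum>i<k. u i * G i j) \<noteq> 0" using z comp by metis
    then show "\<exists>i<k. G i j \<noteq> 0" by (metis (no_types, lifting) lessThan_iff mult_zero_right sum.neutral)
  qed
  have ex: "\<exists>j. \<exists>c. \<forall>i<k. G i j = c * v i" if v: "\<forall>i\<ge>k. v i = 0" "v i0 \<noteq> 0" for v i0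
  proof -
    have i0: "i0 < k" using v by (meson not_le)
    define Dv where "Dv = {(\<Sum>i<k. u i *s b i) | u. (\<Sum>i<k. u i * v i) = 0}"
    have Dvs: "vec.subspace Dv"
      unfolding vec.subspace_def
    proof (intro conjI ballI allI)
      show "0 \<in> Dv" unfolding Dv_def by (rule CollectI, rule exI[of _ "\<lambda>_. 0"]) simp
    next
      fix x y assume "x \<in> Dv" "y \<in> Dv"
      then obtain u1 u2 where "x = (\<Sum>i<k. u1 i *s b i)" "(\<Sum>i<k. u1 i * v i) = 0"
        "y = (\<Sum>i<k. u2 i *s b i)" "(\<Sum>i<k. u2 i * v i) = 0" unfolding Dv_def by blast
      then show "x + y \<in> Dv" unfolding Dv_def
        by (intro CollectI exI[of _ "\<lambda>i. u1 i + u2 i"])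
           (simp add: sum.distrib vec.scale_left_distrib distrib_right)
    next
      fix c x assume "x \<in> Dv"
      then obtain u1 where "x = (\<Sum>i<k. u1 i *s b i)" "(\<Sum>i<k. u1 i * v i) = 0"
        unfolding Dv_def by blast
      then show "c *s x \<in> Dv" unfolding Dv_def
        by (intro CollectI exI[of _ "\<lambda>i. c * u1 i"])
           (simp add: vec.scale_sum_right sum_distrib_left[symmetric] mult.assoc)
    qed
    have DvC: "Dv \<subseteq> C" unfolding Dv_def using inC by blast
    have "b i0 \<notin> Dv"
    proof
      assume "b i0 \<in> Dv"
      then obtain u where u: "b i0 = (\<Sum>i<k. u i *s b i)" "(\<Sum>i<k. u i * v i) = 0"
        unfolding Dv_def by blast
      define w where "w i = u i - (if i = i0 then 1 else 0)" for i
      have "(\<Sum>i<k. w i *s b i) = (\<Sum>i<k. u i *s b i) - (\<Sum>i<k. (if i = i0 then 1 else 0) *s b i)"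
        by (simp add: w_def vec.scale_left_diff_distrib sum_subtractf)
      also have "(\<Sum>i<k. (if i = i0 then 1 else 0) *s b i) = b i0"
      proof -
        have "(\<Sum>i<k. (if i = i0 then 1 else 0) *s b i) = (\<Sum>i<k. if i = i0 then b i else 0)"
          by (intro sum.cong) auto
        then show ?thesis using i0 by simp
      qed
      finally have "(\<Sum>i<k. w i *s b i) = 0" using u(1) by simp
      then have "\<forall>i<k. w i = 0" using uniq by blast
      then have "\<forall>i<k. u i = (if i = i0 then 1 else 0)" by (simp add: w_def)
      then have "(\<Sum>i<k. u i * v i) = (\<Sum>i<k. if i = i0 then v i else 0)"
        by (intro sum.cong) auto
      also have "\<dots> = v i0" using i0 by simp
      finally show False using u(2) v(2) by simp
    qed
    moreover have "b i0 \<in> C" using binB[OF i0] B(1) by auto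
    ultimately have "Dv \<noteq> C" by blast
    then have "Supp Dv \<noteq> UNIV" using noD Dvs DvC by blast
    then obtain j where j: "j \<notin> Supp Dv" by blast
    have H: "(\<Sum>i<k. u i * G i j) = 0" if "(\<Sum>i<k. u i * v i) = 0" for u
    proof -
      have "(\<Sum>i<k. u i *s b i) \<in> Dv" unfolding Dv_def using that by blast
      then have "(\<Sum>i<k. u i *s b i) $ j = 0" using j by (auto simp: Supp_def supp_def)
      then show ?thesis using comp by simp
    qed
    have "\<forall>i<k. G i j = (G i0 j / v i0) * v i"
    proof (intro allI impI)
      fix i assume i: "i < k"
      show "G i j = (G i0 j / v i0) * v i"
      proof (cases "i = i0")
        case True then show ?thesis using v(2) by simp
      next
        case False
        define u where "u l = (if l = i then v i0 else if l = i0 then - v i else 0)" for l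
        have "(\<Sum>l<k. u l * v l) = v i0 * v i + (- v i) * v i0"
          unfolding u_def by (rule sum_2pt[OF i i0 False])
        then have "(\<Sum>l<k. u l * v l) = 0" by simp
        then have "(\<Sum>l<k. u l * G l j) = 0" by (rule H)
        moreover have "(\<Sum>l<k. u l * G l j) = v i0 * G i j + (- v i) * G i0 j"
          unfolding u_def by (rule sum_2pt[OF i i0 False])
        ultimately have "v i0 * G i j = v i * G i0 j" by simp
        then show ?thesis using v(2) by (simp add: field_simps)
      qed
    qed
    then show ?thesis by blast
  qed
  have ex1: "\<forall>v::nat \<Rightarrow> 'a. (\<forall>i\<ge>k. v i = 0) \<and> (\<exists>i. v i \<noteq> 0) \<longrightarrow> (\<exists>!j. \<exists>c. \<forall>i<k. G i j = c * v i)"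
  proof (intro allI impI)
    fix v :: "nat \<Rightarrow> 'a" assume v: "(\<forall>i\<ge>k. v i = 0) \<and> (\<exists>i. v i \<noteq> 0)"
    then obtain i0 where "v i0 \<noteq> 0" by blast
    then obtain j c where jc: "\<forall>i<k. G i j = c * v i" using ex v by blast
    show "\<exists>!j. \<exists>c. \<forall>i<k. G i j = c * v i"
    proof (rule ex1I[of _ j])
      show "\<exists>c. \<forall>i<k. G i j = c * v i" using jc by blast
    next
      fix j' assume "\<exists>c. \<forall>i<k. G i j' = c * v i"
      then obtain c' where jc': "\<forall>i<k. G i j' = c' * v i" by blast
      show "j' = j"
      proof (rule ccontr)
        assume jj: "j' \<noteq> j"
        have c0: "c \<noteq> 0" using col jc by fastforce
        have c0': "c' \<noteq> 0" using col jc' by fastforce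
        define y :: "'a^'n" where "y = c' *s axis j 1 - c *s axis j' 1"
        have "y \<in> dual_code C"
        proof -
          have "(\<Sum>l\<in>UNIV. z$l * y$l) = 0" if zC: "z \<in> C" for z
          proof -
            obtain u where z: "z = (\<Sum>i<k. u i *s b i)" using repr[OF zC] by blast
            have "z$j = (\<Sum>i<k. u i * G i j)" unfolding z by (rule comp)
            also have "\<dots> = (\<Sum>i<k. c * (u i * v i))" using jc by (intro sum.cong) auto
            finally have "z$j = c * (\<Sum>i<k. u i * v i)" by (simp add: sum_distrib_left)
            moreover have "z$j' = (\<Sum>i<k. u i * G i j')" unfolding z by (rule comp)
            moreover have "(\<Sum>i<k. u i * G i j') = (\<Sum>i<k. c' * (u i * v i))" using jc' by (intro sum.cong) auto
            ultimately have zz: "z$j = c * (\<Sum>i<k. u i * v i)" "z$j' = c' * (\<Sum>i<k. u i * v i)"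
              by (simp_all add: sum_distrib_left)
            from zz
            show ?thesis using sum_2vec[of j j' z c' c] jj zz by (simp add: y_def)
          qed
          then show ?thesis by (simp add: dual_iff)
        qed
        moreover have "y \<noteq> 0"
        proof -
          have "y$j = c'" using jj by (simp add: y_def axis_def)
          then show ?thesis using c0' by auto
        qed
        moreover have "wt y \<le> card {j, j'}"
          by (rule wt_le_card) (auto simp: supp_def y_def axis_def)
        ultimately have "min_dist (dual_code C) \<le> 2" using md_le[of y] jj by fastforce
        then show False using d3 by simp
      qed
    qed
  qed
  have rs: "row_space k G = C"
  proof
    show "row_space k G \<subseteq> C"
    proof
      fix x assume "x \<in> row_space k G"
      then obtain u where "x = (\<chi> j. \<Sum>i<k. u i * G i j)" by (auto simp: row_space_def)
      then have "x = (\<Sum>i<k. u i *s b i)" by (simp add: vec_eq_iff G_def sum_component)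
      then show "x \<in> C" using inC by simp
    qed
  next
    show "C \<subseteq> row_space k G"
    proof
      fix z assume "z \<in> C"
      then obtain u where "z = (\<Sum>i<k. u i *s b i)" using repr by blast
      then have "z = (\<chi> j. \<Sum>i<k. u i * G i j)" by (simp add: vec_eq_iff G_def sum_component)
      then show "z \<in> row_space k G" by (auto simp: row_space_def)
    qed
  qed
  have "dual_hamming_generator k G"
    unfolding dual_hamming_generator_def using ham_card[OF col ex1] col ex1 by blast
  then show ?thesis unfolding is_dual_hamming_def k_def[symmetric] using rs by blast
qed

lemma mono_refl: "monomially_equivalent C C"
  unfolding monomially_equivalent_def
  by (intro exI[of _ id] exI[of _ "\<lambda>_. 1"]) (simp add: vec_lambda_eta)

lemma part_d3:
  fixes C :: "('a::{finite,field}^'n::finite) set"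
  assumes C: "vec.subspace C" and d3: "min_dist (dual_code C) = 3"
    and notP: "\<not> (\<exists>k' H. is_dual_hamming k' H \<and> monomially_equivalent C H)"
  shows "covering_dim C \<le> enat (vec.dim C + 2 - 3)"
proof -
  have SC: "Supp C = UNIV" using Supp_full[OF C] d3 by simp
  show ?thesis
  proof (cases "\<exists>D. vec.subspace D \<and> D \<subseteq> C \<and> Supp D = UNIV \<and> D \<noteq> C")
    case True
    then obtain D where D: "vec.subspace D" "D \<subseteq> C" "Supp D = UNIV" "D \<noteq> C" by blast
    then obtain x where "x \<in> C" "x \<notin> D" by blast
    then have "vec.dim D < vec.dim C" using dim_lt_if_notin D by blast
    then have "vec.dim D \<le> vec.dim C + 2 - 3" by simp
    then show ?thesis using cov_le[OF SC D(1-3)] by (meson enat_ord_simps(1) order_trans)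
  next
    case False
    then have "is_dual_hamming (vec.dim C) C" using hamming_construct[OF C] d3 by auto
    then show ?thesis using notP mono_refl by blast
  qed
qed

lemma supp_full_K:
  fixes C :: "('a::field^'n::finite) set"
  assumes "y \<in> dual_code C" "y \<noteq> 0" "supp y \<subseteq> K" "card K \<le> min_dist (dual_code C)"
  shows "supp y = K"
proof (rule card_seteq)
  show "finite K" by simp
  show "supp y \<subseteq> K" by fact
  have "min_dist (dual_code C) \<le> wt y" using md_le assms(1,2) by blast
  then show "card K \<le> card (supp y)" using assms(4) by (simp add: wt_def)
qed

lemma constr:
  fixes C :: "('a::field^'n::finite) set"
  assumes C: "vec.subspace C" and d4: "4 \<le> min_dist (dual_code C)"
    and J': "card J' = min_dist (dual_code C) - 2" and j0: "j0 \<notin> J'"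
    and al: "\<forall>i\<in>J'. al i \<noteq> 0" and be: "be \<noteq> 0"
    and good: "\<forall>y\<in>dual_code C. \<forall>j. j \<notin> insert j0 J' \<and> supp y \<subseteq> insert j (insert j0 J') \<and> y$j0 = 1
                 \<longrightarrow> be + (\<Sum>i\<in>J'. y$i * al i) \<noteq> 0"
  shows "covering_dim C \<le> enat (vec.dim C + 2 - min_dist (dual_code C))"
proof -
  define d where "d = min_dist (dual_code C)"
  define J where "J = insert j0 J'"
  have fJ': "finite J'" by simp
  have cJ: "card J = d - 1" using J' j0 d4 by (simp add: J_def d_def)
  have cJd: "card J < d" using cJ d4 by (simp add: d_def)
  have SC: "Supp C = UNIV" using Supp_full[OF C] d4 by simp
  define a :: "'a^'n" where "a = (\<chi> i. if i = j0 then be else if i \<in> J' then al i else 0)"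
  have aJ: "a$i \<noteq> 0" if "i \<in> J" for i using that al be j0 by (auto simp: a_def J_def)
  have aj0: "a$j0 = be" by (simp add: a_def)
  have aJ': "a$i = al i" if "i \<in> J'" for i using that j0 by (auto simp: a_def)
  define D where "D = {z \<in> C. \<exists>t. \<forall>i\<in>J. z$i = t * a$i}"
  have Ds: "vec.subspace D"
    unfolding vec.subspace_def
  proof (intro conjI ballI allI)
    show "0 \<in> D" unfolding D_def using vec.subspace_0[OF C] by auto
  next
    fix x y assume "x \<in> D" "y \<in> D"
    then obtain t1 t2 where "x \<in> C" "y \<in> C" "\<forall>i\<in>J. x$i = t1 * a$i" "\<forall>i\<in>J. y$i = t2 * a$i"
      unfolding D_def by blast
    then show "x + y \<in> D" unfolding D_def using vec.subspace_add[OF C]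
      by (auto intro!: exI[of _ "t1 + t2"] simp: distrib_right)
  next
    fix c x assume "x \<in> D"
    then obtain t1 where "x \<in> C" "\<forall>i\<in>J. x$i = t1 * a$i" unfolding D_def by blast
    then show "c *s x \<in> D" unfolding D_def using vec.subspace_scale[OF C]
      by (auto intro!: exI[of _ "c * t1"] simp: mult.assoc)
  qed
  have DC: "D \<subseteq> C" unfolding D_def by blast
  have inD: "z \<in> D" if "z \<in> C" "\<forall>i\<in>J. z$i = a$i" for z
    using that unfolding D_def by (auto intro!: exI[of _ 1])
  have DS: "Supp D = UNIV"
  proof -
    have "\<exists>z\<in>D. z$l \<noteq> 0" for l
    proof (cases "l \<in> J")
      case True
      obtain z where z: "z \<in> C" "\<forall>i\<in>J. z$i = a$i" using surj_lemma[OF C, of J a] cJd by (auto simp: d_def)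
      then have "z \<in> D" using inD by blast
      moreover have "z$l \<noteq> 0" using z(2) aJ[OF True] True by simp
      ultimately show ?thesis by blast
    next
      case False
      define K where "K = insert l J"
      have cK: "card K = d" using False cJ d4 by (simp add: K_def d_def)
      have "\<exists>s. s \<noteq> 0 \<and> (\<forall>y\<in>dual_code C. supp y \<subseteq> K \<longrightarrow>
              (\<Sum>i\<in>K. y$i * (\<chi> i. if i = l then s else a$i)$i) = 0)"
      proof (cases "\<exists>y0\<in>dual_code C. supp y0 \<subseteq> K \<and> y0 \<noteq> 0")
        case True
        then obtain y0 where y0: "y0 \<in> dual_code C" "supp y0 \<subseteq> K" "y0 \<noteq> 0" by blast
        have sy0: "supp y0 = K" using supp_full_K[OF y0(1,3,2)] cK by (simp add: d_def)
        have y0j0: "y0$j0 \<noteq> 0" using sy0 by (auto simp: supp_def K_def J_def)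
        define y1 where "y1 = inverse (y0$j0) *s y0"
        have y1d: "y1 \<in> dual_code C" unfolding y1_def by (rule dual_scale[OF y0(1)])
        have y1j0: "y1$j0 = 1" using y0j0 by (simp add: y1_def)
        have sy1: "supp y1 = K" using sy0 y0j0 by (auto simp: y1_def supp_def)
        have y1l: "y1$l \<noteq> 0" using sy1 by (auto simp: supp_def K_def)
        define S where "S = (\<Sum>i\<in>J. y1$i * a$i)"
        have "S = y1$j0 * a$j0 + (\<Sum>i\<in>J'. y1$i * a$i)"
          unfolding S_def J_def using j0 by (simp add: sum.insert)
        also have "\<dots> = be + (\<Sum>i\<in>J'. y1$i * al i)" using y1j0 aj0 aJ' by simp
        moreover have "be + (\<Sum>i\<in>J'. y1$i * al i) \<noteq> 0"
          using good y1d y1j0 sy1 False unfolding K_def J_def by blast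
        ultimately have "S \<noteq> 0" by simp
        define s where "s = - S / y1$l"
        show ?thesis
        proof (intro exI[of _ s] conjI ballI impI)
          show "s \<noteq> 0" using \<open>S \<noteq> 0\<close> y1l by (simp add: s_def)
        next
          fix y assume y: "y \<in> dual_code C" "supp y \<subseteq> K"
          define w where "w = y - (y$j0) *s y1"
          have wd: "w \<in> dual_code C" unfolding w_def using y(1) y1d by (intro dual_diff dual_scale)
          have "supp w \<subseteq> K - {j0}" using y(2) sy1 y1j0 by (auto simp: supp_def w_def)
          moreover have "card (K - {j0}) < d" using cK d4 by (simp add: K_def J_def d_def)
          ultimately have "w = 0" using small_dual_zero[OF wd] by (simp add: d_def)
          then have yy: "y = (y$j0) *s y1" by (simp add: w_def)
          have "(\<Sum>i\<in>K. y$i * (\<chi> i. if i = l then s else a$i)$i)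
              = y$j0 * (y1$l * s + (\<Sum>i\<in>J. y1$i * (\<chi> i. if i = l then s else a$i)$i))"
            using False by (subst yy) (simp add: K_def sum.insert sum_distrib_left mult.assoc distrib_left)
          also have "(\<Sum>i\<in>J. y1$i * (\<chi> i. if i = l then s else a$i)$i) = S"
            unfolding S_def using False by (intro sum.cong) auto
          also have "y1$l * s + S = 0" using y1l by (simp add: s_def)
          finally show "(\<Sum>i\<in>K. y$i * (\<chi> i. if i = l then s else a$i)$i) = 0" by simp
        qed
      next
        case False
        show ?thesis
        proof (intro exI[of _ 1] conjI ballI impI)
          fix y assume "y \<in> dual_code C" "supp y \<subseteq> K"
          then have "y = 0" using False by blast
          then show "(\<Sum>i\<in>K. y$i * (\<chi> i. if i = l then 1 else a$i)$i) = 0" by simp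
        qed simp
      qed
      then obtain s where s: "s \<noteq> 0" and hs: "\<forall>y\<in>dual_code C. supp y \<subseteq> K \<longrightarrow>
              (\<Sum>i\<in>K. y$i * (\<chi> i. if i = l then s else a$i)$i) = 0" by blast
      obtain z where z: "z \<in> C" "\<forall>i\<in>K. z$i = (\<chi> i. if i = l then s else a$i)$i"
        using ext_lemma[OF C hs] by blast
      have "z \<in> D" using z False by (intro inD) (auto simp: K_def)
      moreover have "z$l \<noteq> 0" using z s by (simp add: K_def)
      ultimately show ?thesis by blast
    qed
    then show ?thesis by (auto simp: Supp_def supp_def)
  qed
  have "\<forall>i\<in>J'. \<exists>z\<in>C. \<forall>l\<in>J. z$l = (axis i 1 :: 'a^'n)$l"
    using surj_lemma[OF C] cJd by (auto simp: d_def)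
  then obtain zf where zf: "\<forall>i\<in>J'. zf i \<in> C \<and> (\<forall>l\<in>J. zf i $ l = (axis i 1 :: 'a^'n)$l)"
    by metis
  have dimZ: "vec.dim (D \<union> zf ` Z) = vec.dim D + card Z" if "Z \<subseteq> J'" for Z
  proof -
    have "finite Z" by simp
    then show ?thesis using that
    proof (induction Z rule: finite_subset_induct')
      case empty then show ?case by simp
    next
      case (insert i Z)
      define T where "T = {w. \<exists>t. \<forall>l\<in>J - Z. w$l = t * a$l}"
      have Ts: "vec.subspace T"
        unfolding vec.subspace_def
      proof (intro conjI ballI allI)
        show "0 \<in> T" unfolding T_def by (auto intro!: exI[of _ 0])
      next
        fix x y assume "x \<in> T" "y \<in> T"
        then obtain t1 t2 where "\<forall>l\<in>J - Z. x$l = t1 * a$l" "\<forall>l\<in>J - Z. y$l = t2 * a$l"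
          unfolding T_def by blast
        then show "x + y \<in> T" unfolding T_def by (auto intro!: exI[of _ "t1 + t2"] simp: distrib_right)
      next
        fix c x assume "x \<in> T"
        then obtain t1 where "\<forall>l\<in>J - Z. x$l = t1 * a$l" unfolding T_def by blast
        then show "c *s x \<in> T" unfolding T_def by (auto intro!: exI[of _ "c * t1"] simp: mult.assoc)
      qed
      have "D \<union> zf ` Z \<subseteq> T"
      proof
        fix w assume "w \<in> D \<union> zf ` Z"
        then show "w \<in> T"
        proof
          assume "w \<in> D" then show "w \<in> T" unfolding D_def T_def by auto
        next
          assume "w \<in> zf ` Z"
          then obtain m where m: "m \<in> Z" "w = zf m" by blast
          have "m \<in> J'" using m insert by auto
          then have "\<forall>l\<in>J - Z. w$l = 0 * a$l" using zf m by (auto simp: axis_def)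
          then show "w \<in> T" unfolding T_def by blast
        qed
      qed
      then have spT: "vec.span (D \<union> zf ` Z) \<subseteq> T" using Ts by (rule vec.span_minimal)
      have "zf i \<notin> T"
      proof
        assume "zf i \<in> T"
        then obtain t where t: "\<forall>l\<in>J - Z. zf i $ l = t * a$l" unfolding T_def by blast
        have "j0 \<in> J - Z" using j0 insert by (auto simp: J_def)
        moreover have "i \<noteq> j0" using insert j0 by auto
        moreover have "zf i $ j0 = t * a$j0" using t \<open>j0 \<in> J - Z\<close> by blast
        moreover have "zf i $ j0 = 0"
        proof -
          have "i \<in> J'" using insert by auto
          then have "zf i $ j0 = (axis i 1 :: 'a^'n) $ j0" using zf by (auto simp: J_def)
          then show ?thesis using \<open>i \<noteq> j0\<close> by (simp add: axis_def)
        qed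
        ultimately have "t * be = 0" using aj0 by simp
        then have "t = 0" using be by simp
        moreover have "i \<in> J - Z" using insert by (auto simp: J_def)
        ultimately have "zf i $ i = 0" using t by simp
        moreover have "zf i $ i = 1" using zf insert by (auto simp: axis_def J_def)
        ultimately show False by simp
      qed
      then have "zf i \<notin> vec.span (D \<union> zf ` Z)" using spT by blast
      then have "vec.dim (insert (zf i) (D \<union> zf ` Z)) = vec.dim (D \<union> zf ` Z) + 1"
        by (simp add: vec.dim_insert)
      moreover have "D \<union> zf ` insert i Z = insert (zf i) (D \<union> zf ` Z)" by auto
      ultimately show ?case using insert by simp
    qed
  qed
  have "vec.dim (D \<union> zf ` J') \<le> vec.dim C"
    using DC zf by (intro vec.dim_subset) auto
  then have "vec.dim D + (d - 2) \<le> vec.dim C" using dimZ[OF order_refl] J' by (simp add: d_def)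
  then have "vec.dim D \<le> vec.dim C + 2 - d" using d4 by (simp add: d_def)
  then show ?thesis using cov_le[OF SC Ds DC DS] by (simp add: d_def) (meson enat_ord_simps(1) order_trans)
qed

definition Yset :: "('a::field^'n::finite) set \<Rightarrow> 'n set \<Rightarrow> 'n \<Rightarrow> ('a^'n) set" where
  "Yset C J' j0 = {y \<in> dual_code C. y$j0 = 1 \<and> (\<exists>j. j \<notin> insert j0 J' \<and> supp y \<subseteq> insert j (insert j0 J'))}"

lemma card_insert_le_suc: "card (insert x A) \<le> Suc (card A)" for A :: "'n::finite set"
  by (simp add: card_insert_if)

lemma Y_supp:
  fixes C :: "('a::field^'n::finite) set"
  assumes J': "card J' = min_dist (dual_code C) - 2" and j0: "j0 \<notin> J'" and d4: "4 \<le> min_dist (dual_code C)"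
    and y: "y \<in> dual_code C" "y$j0 = 1" "j \<notin> insert j0 J'" "supp y \<subseteq> insert j (insert j0 J')"
  shows "supp y = insert j (insert j0 J')"
proof (rule supp_full_K[OF y(1) _ y(4)])
  show "y \<noteq> 0" using y(2) by auto
  show "card (insert j (insert j0 J')) \<le> min_dist (dual_code C)" using J' j0 y(3) d4 by simp
qed

lemma Y_P0:
  fixes C :: "('a::field^'n::finite) set"
  assumes J': "card J' = min_dist (dual_code C) - 2" and j0: "j0 \<notin> J'" and d4: "4 \<le> min_dist (dual_code C)"
    and y: "y \<in> Yset C J' j0" and i: "i \<in> J'"
  shows "y$i \<noteq> 0"
proof -
  obtain j where "y \<in> dual_code C" "y$j0 = 1" "j \<notin> insert j0 J'" "supp y \<subseteq> insert j (insert j0 J')"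
    using y by (auto simp: Yset_def)
  then have "supp y = insert j (insert j0 J')" using Y_supp[OF J' j0 d4] by blast
  then show ?thesis using i by (auto simp: supp_def)
qed

lemma Y_P1:
  fixes C :: "('a::field^'n::finite) set"
  assumes J': "card J' = min_dist (dual_code C) - 2" and j0: "j0 \<notin> J'" and d4: "4 \<le> min_dist (dual_code C)"
    and y: "y \<in> Yset C J' j0" and y': "y' \<in> Yset C J' j0"
  shows "(\<forall>i\<in>J'. y$i = y'$i) \<or> (\<forall>i\<in>J'. y$i \<noteq> y'$i)"
proof -
  define d where "d = min_dist (dual_code C)"
  obtain j where yj: "y \<in> dual_code C" "y$j0 = 1" "j \<notin> insert j0 J'" "supp y \<subseteq> insert j (insert j0 J')"
    using y by (auto simp: Yset_def)
  obtain j' where yj': "y' \<in> dual_code C" "y'$j0 = 1" "j' \<notin> insert j0 J'" "supp y' \<subseteq> insert j' (insert j0 J')"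
    using y' by (auto simp: Yset_def)
  have sy: "supp y = insert j (insert j0 J')" using Y_supp[OF J' j0 d4 yj] .
  have sy': "supp y' = insert j' (insert j0 J')" using Y_supp[OF J' j0 d4 yj'] .
  have ys: "y$x \<noteq> 0 \<longleftrightarrow> x \<in> insert j (insert j0 J')" for x using sy by (auto simp: supp_def)
  have ys': "y'$x \<noteq> 0 \<longleftrightarrow> x \<in> insert j' (insert j0 J')" for x using sy' by (auto simp: supp_def)
  define w where "w = y - y'"
  have wd: "w \<in> dual_code C" unfolding w_def using yj(1) yj'(1) by (rule dual_diff)
  show ?thesis
  proof (cases "j = j'")
    case True
    have "supp w \<subseteq> insert j J'"
    proof
      fix x assume "x \<in> supp w"
      then have "y$x \<noteq> y'$x" by (simp add: supp_def w_def)
      then show "x \<in> insert j J'" using ys[of x] ys'[of x] True yj(2) yj'(2) by auto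
    qed
    moreover have "card (insert j J') < d" using J' d4 card_insert_le_suc[of j J'] by (simp add: d_def)
    ultimately have "w = 0" using small_dual_zero[OF wd] by (simp add: d_def)
    then show ?thesis by (simp add: w_def)
  next
    case False
    have "\<forall>i\<in>J'. y$i \<noteq> y'$i"
    proof (intro ballI notI)
      fix i assume i: "i \<in> J'" "y$i = y'$i"
      have "supp w \<subseteq> insert j (insert j' (J' - {i}))"
      proof
        fix x assume "x \<in> supp w"
        then have "y$x \<noteq> y'$x" by (simp add: supp_def w_def)
        then show "x \<in> insert j (insert j' (J' - {i}))" using ys[of x] ys'[of x] yj(2) yj'(2) i by auto
      qed
      moreover have "card (insert j (insert j' (J' - {i}))) < d"
      proof -
        have "card (insert j (insert j' (J' - {i}))) \<le> Suc (Suc (card (J' - {i})))"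
          using card_insert_le_suc[of j "insert j' (J' - {i})"] card_insert_le_suc[of j' "J' - {i}"] by simp
        moreover have "card (J' - {i}) = d - 3" using i J' by (simp add: d_def)
        ultimately show ?thesis using d4 by (simp add: d_def)
      qed
      ultimately have "w = 0" using small_dual_zero[OF wd] by (simp add: d_def)
      moreover have "w$j \<noteq> 0"
      proof -
        have "y$j \<noteq> 0" using sy by (auto simp: supp_def)
        moreover have "y'$j = 0" using sy' False yj(3) by (auto simp: supp_def)
        ultimately show ?thesis by (simp add: w_def)
      qed
      ultimately show False by simp
    qed
    then show ?thesis by blast
  qed
qed

lemma exists_not_in:
  fixes S :: "'a::finite set"
  assumes "card S < CARD('a)" shows "\<exists>e. e \<notin> S"
  using assms by (metis UNIV_eq_I less_irrefl)

lemma alpha_exists: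
  fixes de :: "'n \<Rightarrow> 'a::{finite,field}"
  assumes q3: "3 \<le> CARD('a)" and i: "i1 \<in> J'" "i2 \<in> J'" "i1 \<noteq> i2" and fJ: "finite J'"
    and de: "\<forall>i\<in>J'. de i \<noteq> 0"
  shows "\<exists>al. (\<forall>i\<in>J'. al i \<noteq> 0) \<and> (\<Sum>i\<in>J'. de i * al i) = 0"
proof -
  define m where "m = card (J' - {i1} - {i2})"
  have "card {0::'a, - of_nat m} \<le> 2" by (simp add: card_insert_if)
  then have "card {0::'a, - of_nat m} < CARD('a)" using q3 by simp
  then obtain e :: 'a where e: "e \<notin> {0, - of_nat m}" using exists_not_in by blast
  define c where "c i = (if i = i1 then - (of_nat m + e) else if i = i2 then e else 1)" for i
  have c0: "c i \<noteq> 0" for i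
  proof -
    have "of_nat m + e \<noteq> 0"
    proof
      assume "of_nat m + e = 0"
      then have "e = - of_nat m" by algebra
      then show False using e by simp
    qed
    then show ?thesis using e by (auto simp: c_def)
  qed
  define al where "al i = inverse (de i) * c i" for i
  have "(\<Sum>i\<in>J'. de i * al i) = (\<Sum>i\<in>J'. c i)"
    using de by (intro sum.cong) (auto simp: al_def)
  also have "\<dots> = c i1 + (c i2 + (\<Sum>i\<in>J' - {i1} - {i2}. c i))"
    using i fJ by (simp add: sum.remove)
  also have "(\<Sum>i\<in>J' - {i1} - {i2}. c i) = (\<Sum>i\<in>J' - {i1} - {i2}. 1)"
    by (intro sum.cong) (auto simp: c_def)
  also have "\<dots> = of_nat m" by (simp add: m_def)
  also have "c i1 + (c i2 + of_nat m) = 0" using i by (simp add: c_def)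
  finally have "(\<Sum>i\<in>J'. de i * al i) = 0" .
  moreover have "\<forall>i\<in>J'. al i \<noteq> 0" using de c0 by (simp add: al_def)
  ultimately show ?thesis by blast
qed

lemma comb:
  fixes Y :: "('a::{finite,field}^'n::finite) set"
  assumes q3: "3 \<le> CARD('a)" and cJ: "2 \<le> card J'"
    and P0: "\<forall>y\<in>Y. \<forall>i\<in>J'. y$i \<noteq> 0"
    and P1: "\<forall>y\<in>Y. \<forall>y'\<in>Y. (\<forall>i\<in>J'. y$i = y'$i) \<or> (\<forall>i\<in>J'. y$i \<noteq> y'$i)"
  shows "\<exists>al be. (\<forall>i\<in>J'. al i \<noteq> 0) \<and> be \<noteq> 0 \<and> (\<forall>y\<in>Y. be + (\<Sum>i\<in>J'. y$i * al i) \<noteq> 0)"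
proof -
  obtain T where T: "T \<subseteq> J'" "card T = 2" "finite T" by (rule obtain_subset_with_card_n[OF cJ])
  from T(2) obtain i1 i2 where "T = {i1,i2}" "i1 \<noteq> i2" unfolding card_2_iff by blast
  then have i12: "i1 \<in> J'" "i2 \<in> J'" "i1 \<noteq> i2" using T(1) by auto
  define X where "X = (\<lambda>y. y$i1) ` Y"
  have X0: "X \<subseteq> UNIV - {0}" using P0 i12 by (auto simp: X_def)
  have cX: "card X \<le> CARD('a) - 1"
  proof -
    have "card X \<le> card (UNIV - {0::'a})" using X0 by (intro card_mono) auto
    then show ?thesis by (simp add: card_Diff_subset)
  qed
  define rep where "rep c = (SOME y. y \<in> Y \<and> y$i1 = c)" for c
  have repY: "rep c \<in> Y \<and> rep c $ i1 = c" if "c \<in> X" for c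
  proof -
    have "\<exists>y. y \<in> Y \<and> y$i1 = c" using that by (auto simp: X_def)
    then show ?thesis unfolding rep_def by (rule someI_ex)
  qed
  have same: "y$i = rep (y$i1) $ i" if "y \<in> Y" "i \<in> J'" for y i
  proof -
    have "y$i1 \<in> X" using that by (auto simp: X_def)
    then have r: "rep (y$i1) \<in> Y" "rep (y$i1) $ i1 = y$i1" using repY by auto
    have "(\<forall>i\<in>J'. y$i = rep (y$i1)$i) \<or> (\<forall>i\<in>J'. y$i \<noteq> rep (y$i1)$i)"
      using P1 that(1) r(1) by blast
    then show ?thesis using r(2) i12(1) that(2) by auto
  qed
  define val where "val al y = (\<Sum>i\<in>J'. y$i * al i)" for al and y :: "'a^'n"
  have Vals: "(\<lambda>y. val al y) ` Y = (\<lambda>c. val al (rep c)) ` X" for al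
  proof
    show "(\<lambda>y. val al y) ` Y \<subseteq> (\<lambda>c. val al (rep c)) ` X"
    proof
      fix v assume "v \<in> (\<lambda>y. val al y) ` Y"
      then obtain y where y: "y \<in> Y" "v = val al y" by blast
      have "val al y = val al (rep (y$i1))" unfolding val_def using same y(1) by (intro sum.cong) auto
      moreover have "y$i1 \<in> X" using y by (auto simp: X_def)
      ultimately show "v \<in> (\<lambda>c. val al (rep c)) ` X" using y by blast
    qed
  next
    show "(\<lambda>c. val al (rep c)) ` X \<subseteq> (\<lambda>y. val al y) ` Y" using repY by blast
  qed
  have suff: "\<exists>al be. (\<forall>i\<in>J'. al i \<noteq> 0) \<and> be \<noteq> 0 \<and> (\<forall>y\<in>Y. be + val al y \<noteq> 0)"
    if al: "\<forall>i\<in>J'. al i \<noteq> 0" and cV: "card ((\<lambda>y. val al y) ` Y) < CARD('a) - 1" for al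
  proof -
    have "card (insert 0 ((\<lambda>y. val al y) ` Y)) < CARD('a)"
    proof -
      have "card (insert 0 ((\<lambda>y. val al y) ` Y)) \<le> Suc (card ((\<lambda>y. val al y) ` Y))"
        by (simp add: card_insert_if)
      then show ?thesis using cV by arith
    qed
    then obtain e where e: "e \<notin> insert 0 ((\<lambda>y. val al y) ` Y)" using exists_not_in by blast
    show ?thesis
    proof (intro exI[of _ al] exI[of _ "- e"] conjI ballI)
      show "- e \<noteq> 0" using e by auto
      fix y assume "y \<in> Y"
      then have "val al y \<noteq> e" using e by auto
      show "- e + val al y \<noteq> 0"
      proof
        assume "- e + val al y = 0"
        then have "val al y = e" by algebra
        then show False using \<open>val al y \<noteq> e\<close> by simp
      qed
    qed (use al in auto)
  qed
  have "\<exists>al. (\<forall>i\<in>J'. al i \<noteq> 0) \<and> card ((\<lambda>y. val al y) ` Y) < CARD('a) - 1"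
  proof (cases "card X < CARD('a) - 1")
    case True
    have "card ((\<lambda>c. val (\<lambda>_. 1) (rep c)) ` X) \<le> card X" by (rule card_image_le) simp
    then show ?thesis using True Vals[of "\<lambda>_. 1"] by (intro exI[of _ "\<lambda>_. 1"]) auto
  next
    case False
    then have cX1: "card X = CARD('a) - 1" using cX by simp
    then have "2 \<le> card X" using q3 by simp
    then obtain T2 where T2: "T2 \<subseteq> X" "card T2 = 2" "finite T2" by (rule obtain_subset_with_card_n)
    from T2(2) obtain c1 c2 where "T2 = {c1,c2}" "c1 \<noteq> c2" unfolding card_2_iff by blast
    then have c12: "c1 \<in> X" "c2 \<in> X" "c1 \<noteq> c2" using T2(1) by auto
    define y1 where "y1 = rep c1"
    define y2 where "y2 = rep c2"
    have y1: "y1 \<in> Y" "y1$i1 = c1" using repY[OF c12(1)] by (auto simp: y1_def)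
    have y2: "y2 \<in> Y" "y2$i1 = c2" using repY[OF c12(2)] by (auto simp: y2_def)
    have "(\<forall>i\<in>J'. y1$i = y2$i) \<or> (\<forall>i\<in>J'. y1$i \<noteq> y2$i)" using P1 y1(1) y2(1) by blast
    then have dne: "\<forall>i\<in>J'. y1$i \<noteq> y2$i" using y1(2) y2(2) c12(3) i12(1) by auto
    define de where "de i = y1$i - y2$i" for i
    have "\<forall>i\<in>J'. de i \<noteq> 0" using dne by (simp add: de_def)
    from alpha_exists[OF q3 i12 _ this] obtain al where al: "\<forall>i\<in>J'. al i \<noteq> 0" "(\<Sum>i\<in>J'. de i * al i) = 0"
      by auto
    have "val al y1 = val al y2"
    proof -
      have "val al y1 - val al y2 = (\<Sum>i\<in>J'. de i * al i)"
        unfolding val_def de_def by (simp add: sum_subtractf[symmetric] algebra_simps)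
      then show ?thesis using al(2) by simp
    qed
    then have "\<not> inj_on (\<lambda>c. val al (rep c)) X"
      using c12 by (auto simp: inj_on_def y1_def y2_def)
    then have "card ((\<lambda>c. val al (rep c)) ` X) \<noteq> card X"
      using inj_on_iff_eq_card[of X] by auto
    moreover have "card ((\<lambda>c. val al (rep c)) ` X) \<le> card X" by (rule card_image_le) simp
    ultimately show ?thesis using cX1 Vals[of al] al(1) by (intro exI[of _ al]) auto
  qed
  then obtain al where "\<forall>i\<in>J'. al i \<noteq> 0" "card ((\<lambda>y. val al y) ` Y) < CARD('a) - 1" by blast
  from suff[OF this] show ?thesis unfolding val_def .
qed

lemma bin_even: assumes "CARD('a::{finite,field}) = 2" "even n" shows "(of_nat n::'a) = 0"
proof -
  obtain m where "n = 2*m" using assms(2) by blast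
  then show ?thesis using bin_two[OF assms(1)] by simp
qed

lemma dim_n1:
  fixes C :: "('a::field^'n::finite) set"
  assumes C: "vec.subspace C" and y: "y \<in> dual_code C" "y$j0 \<noteq> 0"
    and cK: "card (UNIV - {j0}) < min_dist (dual_code C)"
  shows "vec.dim C = CARD('n) - 1"
proof -
  define e :: "'a^'n" where "e = axis j0 1"
  have "(\<Sum>l\<in>UNIV. e$l * y$l) = (\<Sum>l\<in>UNIV. if l = j0 then y$l else 0)"
    by (intro sum.cong) (auto simp: e_def axis_def)
  also have "\<dots> = y$j0" by simp
  finally have "e \<notin> C" using y by (auto simp: dual_iff)
  then have "e \<notin> vec.span C" using C by (simp add: vec.span_eq_iff[THEN iffD2])
  then have di: "vec.dim (insert e C) = vec.dim C + 1" by (simp add: vec.dim_insert)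
  have "vec.dim (insert e C) \<le> vec.dim (UNIV :: ('a^'n) set)" by (rule vec.dim_subset) simp
  also have "\<dots> = CARD('n)" by (simp add: vec.dim_UNIV card_cart_basis)
  finally have le: "vec.dim (insert e C) \<le> CARD('n)" .
  have "UNIV \<subseteq> vec.span (insert e C)"
  proof
    fix x :: "'a^'n"
    obtain z where z: "z \<in> C" "\<forall>i\<in>UNIV - {j0}. z$i = x$i" using surj_lemma[OF C cK] by blast
    have "x = z + (x$j0 - z$j0) *s e"
      using z(2) by (auto simp: vec_eq_iff e_def axis_def)
    moreover have "z \<in> vec.span (insert e C)" using z(1) by (auto intro: vec.span_base)
    moreover have "e \<in> vec.span (insert e C)" by (auto intro: vec.span_base)
    ultimately show "x \<in> vec.span (insert e C)" by (metis vec.span_add vec.span_scale)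
  qed
  then have "vec.dim (UNIV :: ('a^'n) set) \<le> vec.dim (vec.span (insert e C))" by (rule vec.dim_subset)
  then have "CARD('n) \<le> vec.dim (insert e C)" by (simp add: vec.dim_UNIV card_cart_basis)
  then show ?thesis using le di by simp
qed

lemma card_ge2_field: "2 \<le> CARD('a::{finite,field})"
proof -
  have "card {0,1::'a} \<le> CARD('a)" by (intro card_mono) auto
  then show ?thesis by simp
qed

lemma part_d4:
  fixes C :: "('a::{finite,field}^'n::finite) set"
  assumes C: "vec.subspace C" and dne: "dual_code C \<noteq> {0}" and d4: "4 \<le> min_dist (dual_code C)"
    and notQ: "\<not> (CARD('a) = 2 \<and> vec.dim C = CARD('n) - 1 \<and> min_dist (dual_code C) = CARD('n) \<and> odd CARD('n))"
  shows "covering_dim C \<le> enat (vec.dim C + 2 - min_dist (dual_code C))"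
proof -
  define d where "d = min_dist (dual_code C)"
  have cons: "covering_dim C \<le> enat (vec.dim C + 2 - d)"
    if J': "card J' = d - 2" "j0 \<notin> J'" and ab: "\<forall>i\<in>J'. al i \<noteq> 0" "be \<noteq> 0"
      and gd: "\<forall>y\<in>Yset C J' j0. be + (\<Sum>i\<in>J'. y$i * al i) \<noteq> 0" for J' j0 al be
  proof -
    have "\<forall>y\<in>dual_code C. \<forall>j. j \<notin> insert j0 J' \<and> supp y \<subseteq> insert j (insert j0 J') \<and> y$j0 = 1
                 \<longrightarrow> be + (\<Sum>i\<in>J'. y$i * al i) \<noteq> 0"
      using gd by (auto simp: Yset_def)
    from constr[OF C d4 J'(1)[unfolded d_def] J'(2) ab this] show ?thesis by (simp add: d_def)
  qed
  have cons0: "covering_dim C \<le> enat (vec.dim C + 2 - d)"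
    if J': "card J' = d - 2" "j0 \<notin> J'" and Y0: "Yset C J' j0 = {}" for J' j0
    by (rule cons[OF J', of "\<lambda>_. 1" 1]) (use Y0 in auto)
  have dual0: "0 \<in> dual_code C" by (simp add: dual_code_def)
  then obtain y0 where "y0 \<in> dual_code C" "y0 \<noteq> 0" "wt y0 = d"
    using md_attained dne d_def by blast
  then have dn: "d \<le> CARD('n)" using wt_le_n[of y0] by simp
  then have "d - 1 \<le> card (UNIV :: 'n set)" by simp
  then obtain J0 :: "'n set" where J0: "card J0 = d - 1" "finite J0" by (meson obtain_subset_with_card_n)
  then have "J0 \<noteq> {}" using d4 d_def by auto
  then obtain j0 where j0J0: "j0 \<in> J0" by blast
  define J' where "J' = J0 - {j0}"
  have J'c: "card J' = d - 2" using J0 j0J0 by (simp add: J'_def)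
  have j0J': "j0 \<notin> J'" by (simp add: J'_def)
  have J0eq: "J0 = insert j0 J'" using j0J0 by (auto simp: J'_def)
  have Jd: "card J' = min_dist (dual_code C) - 2" using J'c d_def by simp
  have d4': "4 \<le> d" using d4 d_def by simp
  have "covering_dim C \<le> enat (vec.dim C + 2 - d)"
  proof (cases "3 \<le> CARD('a)")
    case True
    have P0: "\<forall>y\<in>Yset C J' j0. \<forall>i\<in>J'. y$i \<noteq> 0" using Y_P0[OF Jd j0J' d4] by blast
    have P1: "\<forall>y\<in>Yset C J' j0. \<forall>y'\<in>Yset C J' j0. (\<forall>i\<in>J'. y$i = y'$i) \<or> (\<forall>i\<in>J'. y$i \<noteq> y'$i)"
      using Y_P1[OF Jd j0J' d4] by blast
    have "2 \<le> card J'" using J'c d4' by simp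
    from comb[OF True this P0 P1] obtain al be where
      "\<forall>i\<in>J'. al i \<noteq> 0" "be \<noteq> 0" "\<forall>y\<in>Yset C J' j0. be + (\<Sum>i\<in>J'. y$i * al i) \<noteq> 0" by blast
    then show ?thesis by (rule cons[OF J'c j0J'])
  next
    case False
    then have q2: "CARD('a) = 2" using card_ge2_field[where 'a='a] by simp
    show ?thesis
    proof (cases "even d")
      case True
      show ?thesis
      proof (rule cons[OF J'c j0J', of "\<lambda>_. 1" 1])
        show "\<forall>y\<in>Yset C J' j0. 1 + (\<Sum>i\<in>J'. y$i * 1) \<noteq> 0"
        proof
          fix y assume y: "y \<in> Yset C J' j0"
          have "(\<Sum>i\<in>J'. y$i * 1) = (\<Sum>i\<in>J'. (1::'a))"
            using Y_P0[OF Jd j0J' d4 y] bin_nz[OF q2] by (intro sum.cong) auto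
          also have "\<dots> = of_nat (d - 2)" using J'c by simp
          also have "\<dots> = 0" using bin_even[OF q2] True d4' by simp
          finally show "1 + (\<Sum>i\<in>J'. y$i * 1) \<noteq> 0" by simp
        qed
      qed auto
    next
      case oddd: False
      show ?thesis
      proof (cases "Yset C J' j0 = {}")
        case True then show ?thesis by (rule cons0[OF J'c j0J'])
      next
        case False
        then obtain y where y: "y \<in> Yset C J' j0" by blast
        then obtain j where yj: "y \<in> dual_code C" "y$j0 = 1" "j \<notin> insert j0 J'" "supp y \<subseteq> insert j (insert j0 J')"
          by (auto simp: Yset_def)
        have sy: "supp y = insert j (insert j0 J')" using Y_supp[OF Jd j0J' d4 yj] .
        have y1: "y$l = 1" if "l \<in> insert j (insert j0 J')" for l
          using sy that bin_nz[OF q2] by (auto simp: supp_def)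
        have y0: "y$l = 0" if "l \<notin> insert j (insert j0 J')" for l
          using sy that by (auto simp: supp_def)
        show ?thesis
        proof (cases "insert j (insert j0 J') = UNIV")
          case True
          have "card (insert j (insert j0 J')) = d" using J'c j0J' yj(3) d4' by simp
          then have cn: "CARD('n) = d" using True by simp
          have "card (UNIV - {j0}) < min_dist (dual_code C)" using cn d4' d_def by (simp add: card_Diff_subset)
          moreover have "y$j0 \<noteq> 0" using yj(2) by simp
          ultimately have "vec.dim C = CARD('n) - 1" using dim_n1[OF C yj(1)] by blast
          then show ?thesis using notQ q2 cn oddd d_def by simp
        next
          case False
          then obtain m where m: "m \<notin> insert j (insert j0 J')" by blast
          have "J' \<noteq> {}" using J'c d4' by auto
          then obtain i where i: "i \<in> J'" by blast
          define J1 where "J1 = insert m (J' - {i})"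
          have J1c: "card J1 = d - 2" using m i J'c d4' by (simp add: J1_def)
          have j0J1: "j0 \<notin> J1" using m j0J' by (auto simp: J1_def)
          show ?thesis
          proof (cases "Yset C J1 j0 = {}")
            case True then show ?thesis by (rule cons0[OF J1c j0J1])
          next
            case False
            then obtain y' where y': "y' \<in> Yset C J1 j0" by blast
            then obtain j' where yj': "y' \<in> dual_code C" "y'$j0 = 1" "j' \<notin> insert j0 J1"
                "supp y' \<subseteq> insert j' (insert j0 J1)"
              by (auto simp: Yset_def)
            have J1d: "card J1 = min_dist (dual_code C) - 2" using J1c d_def by simp
            have sy': "supp y' = insert j' (insert j0 J1)" using Y_supp[OF J1d j0J1 d4 yj'] .
            have y1': "y'$l = 1" if "l \<in> insert j' (insert j0 J1)" for l
              using sy' that bin_nz[OF q2] by (auto simp: supp_def)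
            have y0': "y'$l = 0" if "l \<notin> insert j' (insert j0 J1)" for l
              using sy' that by (auto simp: supp_def)
            define w where "w = y - y'"
            have wd: "w \<in> dual_code C" unfolding w_def using yj(1) yj'(1) by (rule dual_diff)
            have "w$m \<noteq> 0"
            proof -
              have "y$m = 0" using y0 m by blast
              moreover have "y'$m = 1" using y1' by (simp add: J1_def)
              ultimately show ?thesis by (simp add: w_def)
            qed
            then have wn: "w \<noteq> 0" by auto
            have "supp w \<subseteq> {i, j, j', m}"
            proof
              fix l assume l: "l \<in> supp w"
              show "l \<in> {i, j, j', m}"
              proof (rule ccontr)
                assume nl: "l \<notin> {i, j, j', m}"
                have "y$l = y'$l"
                proof (cases "l = j0 \<or> l \<in> J'")
                  case True
                  then have "l \<in> insert j (insert j0 J')" by auto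
                  moreover have "l \<in> insert j' (insert j0 J1)" using True nl by (auto simp: J1_def)
                  ultimately show ?thesis using y1 y1' by simp
                next
                  case False
                  then have "l \<notin> insert j (insert j0 J')" using nl by auto
                  moreover have "l \<notin> insert j' (insert j0 J1)" using False nl by (auto simp: J1_def)
                  ultimately show ?thesis using y0 y0' by simp
                qed
                then show False using l by (simp add: supp_def w_def)
              qed
            qed
            then have "wt w \<le> card {i, j, j', m}" by (rule wt_le_card)
            also have "\<dots> \<le> 4" by (simp add: card_insert_if)
            finally have "d \<le> 4" using md_le[OF wd wn] d_def by simp
            moreover have "d \<noteq> 4" using oddd by auto
            ultimately show ?thesis using d4' by simp
          qed
        qed
      qed
    qed
  qed
  then show ?thesis by (simp add: d_def)
qed

theorem mainTheorem12:
  fixes C :: "('a::{finite,field} ^ 'n::finite) set" and n k d :: nat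
  assumes "is_code C"
    and "n = CARD('n)"
    and "k = code_dim C"
    and "dual_code C \<noteq> {0}"
    and "d = min_dist (dual_code C)"
    and "d \<ge> 3"
    and "\<not> ((\<exists>m\<ge>2. CARD('a) = 2 ^ m) \<and> d > 4)"
  shows "(((\<exists>k' H. is_dual_hamming k' H \<and> monomially_equivalent C H)
            \<or> (CARD('a) = 2 \<and> k = n - 1 \<and> d = n \<and> odd n))
           \<longrightarrow> covering_dim C = enat (k + 3 - d))
         \<and> (\<not> ((\<exists>k' H. is_dual_hamming k' H \<and> monomially_equivalent C H)
            \<or> (CARD('a) = 2 \<and> k = n - 1 \<and> d = n \<and> odd n))
           \<longrightarrow> covering_dim C \<le> enat (k + 2 - d))"
proof -
  have C: "vec.subspace C" using assms(1) by (simp add: is_code_def)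
  have kd: "k = vec.dim C" using assms(3) by (simp add: code_dim_def)
  have d3: "3 \<le> min_dist (dual_code C)" using assms(5,6) by simp
  show ?thesis
  proof (intro conjI impI)
    assume "(\<exists>k' H. is_dual_hamming k' H \<and> monomially_equivalent C H)
            \<or> (CARD('a) = 2 \<and> k = n - 1 \<and> d = n \<and> odd n)"
    then show "covering_dim C = enat (k + 3 - d)"
    proof
      assume "\<exists>k' H. is_dual_hamming k' H \<and> monomially_equivalent C H"
      then obtain k' H where "is_dual_hamming k' H" "monomially_equivalent C H" by blast
      from part_ham[OF C assms(4) d3 this] show ?thesis using assms(5) kd by simp
    next
      assume Q: "CARD('a) = 2 \<and> k = n - 1 \<and> d = n \<and> odd n"
      then have "covering_dim C = enat 2" using part_even[OF C assms(4)] assms(2,5) d3 by simp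
      moreover have "k + 3 - d = 2" using Q assms(6) by simp
      ultimately show ?thesis by simp
    qed
  next
    assume nPQ: "\<not> ((\<exists>k' H. is_dual_hamming k' H \<and> monomially_equivalent C H)
            \<or> (CARD('a) = 2 \<and> k = n - 1 \<and> d = n \<and> odd n))"
    show "covering_dim C \<le> enat (k + 2 - d)"
    proof (cases "d = 3")
      case True
      have "min_dist (dual_code C) = 3" using True assms(5) by simp
      from part_d3[OF C this] nPQ show ?thesis using True kd by simp
    next
      case False
      then have "4 \<le> min_dist (dual_code C)" using assms(5,6) by simp
      from part_d4[OF C assms(4) this] nPQ show ?thesis using assms(2,5) kd by simp
    qed
  qed
qed

end
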